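(* Let $k\ge 2$ be fixed and, for each $n$, let $T_1,\dots,T_k$ be independent uniformly random spanning trees of the complete graph $K_n$. For each edge $e$ of $K_n$ let $X_e^{T_i}$ be the indicator of $e\in E(T_i)$, $R_e=\sum_{i=1}^k X_e^{T_i}-\max(X_e^{T_1},\dots,X_e^{T_k})$, and $M=\sum_{e\in E(K_n)}R_e$. Then for every $s>0$, \[\lim_{n\to\infty}\Pr\big(|M-\mathbb{E}[M]|\ge s\,\mathbb{E}[M]\big)\le\frac{1}{s^2k(k-1)}.\]
   Context: Uniform random spanning tree: chosen from the uniform distribution on the $n^{n-2}$ labeled spanning trees of $K_n$ on vertex set $[n]$. $M$ is the number of repeated edges in the multigraph union of the trees. *)

theory Defs
  imports "HOL-Probability.Probability"
begin

definition Kn_edges :: "nat \<Rightarrow> nat set set" where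
  "Kn_edges n = {e. \<exists>a b. a < n \<and> b < n \<and> a \<noteq> b \<and> e = {a, b}}"

definition adj :: "nat set set \<Rightarrow> (nat \<times> nat) set" where
  "adj T = {(a, b). {a, b} \<in> T \<and> a \<noteq> b}"

definition connected_on :: "nat \<Rightarrow> nat set set \<Rightarrow> bool" where
  "connected_on n T \<longleftrightarrow> (\<forall>a<n. \<forall>b<n. (a, b) \<in> (adj T)\<^sup>*)"

definition acyclic_graph :: "nat set set \<Rightarrow> bool" where
  "acyclic_graph T \<longleftrightarrow> \<not> (\<exists>vs. length vs \<ge> 3 \<and> distinct vs \<and>
      (\<forall>i<length vs. {vs ! i, vs ! ((i + 1) mod length vs)} \<in> T))"

definition spanning_tree :: "nat \<Rightarrow> nat set set \<Rightarrow> bool" where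
  "spanning_tree n T \<longleftrightarrow> T \<subseteq> Kn_edges n \<and> connected_on n T \<and> acyclic_graph T"

definition spanning_trees :: "nat \<Rightarrow> nat set set set" where
  "spanning_trees n = {T. spanning_tree n T}"

text \<open>k independent uniform spanning trees = uniform distribution on k-tuples
  (functions on {0..<k}) of spanning trees.\<close>
definition tree_tuples :: "nat \<Rightarrow> nat \<Rightarrow> (nat \<Rightarrow> nat set set) pmf" where
  "tree_tuples k n = pmf_of_set (PiE {..<k} (\<lambda>_. spanning_trees n))"

definition R_edge :: "nat \<Rightarrow> (nat \<Rightarrow> nat set set) \<Rightarrow> nat set \<Rightarrow> real" where
  "R_edge k Ts e = (\<Sum>i<k. of_bool (e \<in> Ts i)) - Max ((\<lambda>i. of_bool (e \<in> Ts i)) ` {..<k})"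

definition M_rep :: "nat \<Rightarrow> nat \<Rightarrow> (nat \<Rightarrow> nat set set) \<Rightarrow> real" where
  "M_rep k n Ts = (\<Sum>e\<in>Kn_edges n. R_edge k Ts e)"

end

theory Submission
  imports Defs "HOL-Library.Transitive_Closure_Table" "HOL-Combinatorics.Permutations" "HOL-Real_Asymp.Real_Asymp"
begin

lemma adj_sym: "(x, y) \<in> adj F \<Longrightarrow> (y, x) \<in> adj F"
  by (auto simp: adj_def insert_commute)

lemma sym_adj: "sym (adj F)"
  by (auto simp: sym_def intro: adj_sym)

lemma reach_sym: "(x, y) \<in> (adj F)\<^sup>* \<Longrightarrow> (y, x) \<in> (adj F)\<^sup>*"
  using sym_rtrancl[OF sym_adj] by (auto simp: sym_def)

lemma adj_mono: "F \<subseteq> G \<Longrightarrow> adj F \<subseteq> adj G"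
  by (auto simp: adj_def)

lemma reach_mono: "F \<subseteq> G \<Longrightarrow> (x, y) \<in> (adj F)\<^sup>* \<Longrightarrow> (x, y) \<in> (adj G)\<^sup>*"
  using rtrancl_mono[OF adj_mono] by blast

lemma adj_edge: "{u, v} \<in> F \<Longrightarrow> u \<noteq> v \<Longrightarrow> (u, v) \<in> adj F"
  by (auto simp: adj_def)

lemma reach_edge: "{u, v} \<in> F \<Longrightarrow> (u, v) \<in> (adj F)\<^sup>*"
  by (cases "u = v") (auto dest: adj_edge)

lemma adj_insert_cases:
  assumes "(y, z) \<in> adj (insert {u, v} F)"
  shows "(y, z) \<in> adj F \<or> (y = u \<and> z = v) \<or> (y = v \<and> z = u)"
  using assms by (auto simp: adj_def doubleton_eq_iff)

lemma reach_insert: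
  assumes "(x, y) \<in> (adj (insert {u, v} F))\<^sup>*"
  shows "(x, y) \<in> (adj F)\<^sup>* \<or> ((x, u) \<in> (adj F)\<^sup>* \<and> (v, y) \<in> (adj F)\<^sup>*)
         \<or> ((x, v) \<in> (adj F)\<^sup>* \<and> (u, y) \<in> (adj F)\<^sup>*)"
  using assms
proof (induction rule: rtrancl_induct)
  case base
  then show ?case by simp
next
  case (step y z)
  from adj_insert_cases[OF step(2)] show ?case
  proof (elim disjE)
    assume "(y, z) \<in> adj F"
    with step(3) show ?thesis
      by (meson rtrancl.rtrancl_into_rtrancl)
  next
    assume "y = u \<and> z = v"
    with step(3) show ?thesis by auto
  next
    assume "y = v \<and> z = u"
    with step(3) show ?thesis by auto
  qed
qed

lemma reach_insert_conn:
  assumes "(u, v) \<in> (adj F)\<^sup>*"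
  shows "(adj (insert {u, v} F))\<^sup>* = (adj F)\<^sup>*"
proof
  show "(adj F)\<^sup>* \<subseteq> (adj (insert {u, v} F))\<^sup>*"
    by (intro rtrancl_mono adj_mono) auto
next
  have vu: "(v, u) \<in> (adj F)\<^sup>*" using reach_sym[OF assms] .
  show "(adj (insert {u, v} F))\<^sup>* \<subseteq> (adj F)\<^sup>*"
  proof
    fix p assume "p \<in> (adj (insert {u, v} F))\<^sup>*"
    then obtain x y where p: "p = (x, y)" "(x, y) \<in> (adj (insert {u, v} F))\<^sup>*"
      by (cases p) auto
    from reach_insert[OF p(2)] show "p \<in> (adj F)\<^sup>*"
      using assms vu p(1) by (meson rtrancl_trans)
  qed
qed

definition cls :: "nat \<Rightarrow> nat set set \<Rightarrow> nat \<Rightarrow> nat set" where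
  "cls n F x = {y. y < n \<and> (x, y) \<in> (adj F)\<^sup>*}"

definition ncomp :: "nat \<Rightarrow> nat set set \<Rightarrow> nat" where
  "ncomp n F = card (cls n F ` {..<n})"

lemma cls_eq:
  assumes "y \<in> cls n F x"
  shows "cls n F y = cls n F x"
  using assms unfolding cls_def
  by (auto intro: rtrancl_trans reach_sym)

lemma self_cls: "x < n \<Longrightarrow> x \<in> cls n F x"
  by (simp add: cls_def)

lemma ncomp_empty: "ncomp n {} = n"
proof -
  have "adj {} = {}" by (simp add: adj_def)
  then have c: "cls n {} x = (if x < n then {x} else {})" for x
    by (auto simp: cls_def)
  have "inj_on (cls n {}) {..<n}"
    by (auto simp: inj_on_def c)
  then show ?thesis unfolding ncomp_def by (simp add: card_image)
qed

lemma ncomp_insert_conn: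
  assumes "(u, v) \<in> (adj F)\<^sup>*"
  shows "ncomp n (insert {u, v} F) = ncomp n F"
  unfolding ncomp_def cls_def reach_insert_conn[OF assms] ..

lemma ncomp_insert_nonconn:
  assumes u: "u < n" and v: "v < n" and nc: "(u, v) \<notin> (adj F)\<^sup>*"
  shows "ncomp n (insert {u, v} F) + 1 = ncomp n F"
proof -
  define A where "A = cls n F u"
  define B where "B = cls n F v"
  define X where "X = cls n F ` {..<n}"
  have vu: "(v, u) \<notin> (adj F)\<^sup>*" using nc reach_sym by blast
  have memA: "y \<in> A \<longleftrightarrow> y < n \<and> (u, y) \<in> (adj F)\<^sup>*" for y by (simp add: A_def cls_def)
  have memB: "y \<in> B \<longleftrightarrow> y < n \<and> (v, y) \<in> (adj F)\<^sup>*" for y by (simp add: B_def cls_def)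
  have key: "cls n (insert {u, v} F) x = (if x \<in> A \<union> B then A \<union> B else cls n F x)"
    if x: "x < n" for x
  proof -
    have iff: "(x, y) \<in> (adj (insert {u, v} F))\<^sup>* \<longleftrightarrow>
       (x, y) \<in> (adj F)\<^sup>* \<or> ((x, u) \<in> (adj F)\<^sup>* \<and> (v, y) \<in> (adj F)\<^sup>*)
         \<or> ((x, v) \<in> (adj F)\<^sup>* \<and> (u, y) \<in> (adj F)\<^sup>*)" for y
    proof
      assume "(x, y) \<in> (adj (insert {u, v} F))\<^sup>*"
      then show "(x, y) \<in> (adj F)\<^sup>* \<or> ((x, u) \<in> (adj F)\<^sup>* \<and> (v, y) \<in> (adj F)\<^sup>*)
         \<or> ((x, v) \<in> (adj F)\<^sup>* \<and> (u, y) \<in> (adj F)\<^sup>*)" by (rule reach_insert)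
    next
      have sub: "(adj F)\<^sup>* \<subseteq> (adj (insert {u, v} F))\<^sup>*"
        by (intro rtrancl_mono adj_mono) auto
      have uv: "(u, v) \<in> (adj (insert {u, v} F))\<^sup>*" "(v, u) \<in> (adj (insert {u, v} F))\<^sup>*"
        by (auto intro: reach_edge simp: insert_commute)
      assume "(x, y) \<in> (adj F)\<^sup>* \<or> ((x, u) \<in> (adj F)\<^sup>* \<and> (v, y) \<in> (adj F)\<^sup>*)
         \<or> ((x, v) \<in> (adj F)\<^sup>* \<and> (u, y) \<in> (adj F)\<^sup>*)"
      then show "(x, y) \<in> (adj (insert {u, v} F))\<^sup>*"
        using sub uv by (meson rtrancl_trans subsetD)
    qed
    show ?thesis
    proof (cases "x \<in> A \<union> B")
      case True
      then have "(u, x) \<in> (adj F)\<^sup>* \<or> (v, x) \<in> (adj F)\<^sup>*" using memA memB by auto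
      then show ?thesis using True
        unfolding cls_def iff A_def B_def
        by (auto intro: rtrancl_trans reach_sym)
    next
      case False
      then have "(x, u) \<notin> (adj F)\<^sup>*" "(x, v) \<notin> (adj F)\<^sup>*"
        using memA memB x reach_sym by blast+
      then show ?thesis using False unfolding cls_def iff by auto
    qed
  qed
  have AB: "A \<in> X" "B \<in> X" using u v by (auto simp: X_def A_def B_def)
  have uA: "u \<in> A" "u \<notin> B" using u vu by (auto simp: memA memB)
  have vB: "v \<in> B" using v by (simp add: memB)
  have AneB: "A \<noteq> B" using uA by auto
  have img: "cls n (insert {u, v} F) ` {..<n} = insert (A \<union> B) (X - {A, B})"
  proof (intro equalityI subsetI)
    fix C assume "C \<in> cls n (insert {u, v} F) ` {..<n}"
    then obtain x where x: "x < n" "C = cls n (insert {u, v} F) x" by auto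
    show "C \<in> insert (A \<union> B) (X - {A, B})"
    proof (cases "x \<in> A \<union> B")
      case True then show ?thesis using key[OF x(1)] x(2) by simp
    next
      case False
      have "cls n F x \<noteq> A" using False self_cls[OF x(1)] by auto
      moreover have "cls n F x \<noteq> B" using False self_cls[OF x(1)] by auto
      ultimately show ?thesis using key[OF x(1)] x False by (auto simp: X_def)
    qed
  next
    fix C assume C: "C \<in> insert (A \<union> B) (X - {A, B})"
    show "C \<in> cls n (insert {u, v} F) ` {..<n}"
    proof (cases "C = A \<union> B")
      case True
      then show ?thesis using key[OF u] uA u by (auto intro!: image_eqI[where x=u])
    next
      case False
      with C obtain x where x: "x < n" "C = cls n F x" "C \<noteq> A" "C \<noteq> B"
        by (auto simp: X_def)
      have "x \<notin> A \<union> B"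
      proof
        assume "x \<in> A \<union> B"
        then show False
          using x cls_eq[of x n F u] cls_eq[of x n F v] by (auto simp: A_def B_def)
      qed
      then show ?thesis using key[OF x(1)] x by auto
    qed
  qed
  have notin: "A \<union> B \<notin> X - {A, B}"
  proof
    assume "A \<union> B \<in> X - {A, B}"
    then obtain x where x: "x < n" "A \<union> B = cls n F x" "A \<union> B \<noteq> A" by (auto simp: X_def)
    have "u \<in> cls n F x" using x uA by auto
    then have "cls n F x = A" using cls_eq A_def by metis
    then show False using x by auto
  qed
  have fin: "finite X" by (simp add: X_def)
  have "card (insert (A \<union> B) (X - {A, B})) = card (X - {A, B}) + 1"
    using fin notin by simp
  moreover have "card (X - {A, B}) + 2 = card X"
  proof -
    have "card {A, B} \<le> card X" using fin AB by (intro card_mono) auto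
    then show ?thesis using fin AB AneB by (simp add: card_Diff_subset)
  qed
  ultimately show ?thesis unfolding ncomp_def img X_def[symmetric] by simp
qed

lemma Kn_edges_sub: "Kn_edges n \<subseteq> Pow {..<n}"
  by (auto simp: Kn_edges_def)

lemma finite_Kn_edges: "finite (Kn_edges n)"
  using Kn_edges_sub by (rule finite_subset) simp

lemma Kn_edgesE:
  assumes "e \<in> Kn_edges n"
  obtains a b where "a < n" "b < n" "a \<noteq> b" "e = {a, b}"
  using assms by (auto simp: Kn_edges_def)

lemma Kn_edgesI: "a < n \<Longrightarrow> b < n \<Longrightarrow> a \<noteq> b \<Longrightarrow> {a, b} \<in> Kn_edges n"
  by (auto simp: Kn_edges_def)

lemma ncomp_insert_ge:
  assumes "u < n" "v < n"
  shows "ncomp n F \<le> ncomp n (insert {u, v} F) + 1"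
proof (cases "(u, v) \<in> (adj F)\<^sup>*")
  case True then show ?thesis using ncomp_insert_conn[OF True] by simp
next
  case False then show ?thesis using ncomp_insert_nonconn[OF assms False] by simp
qed

lemma count_lower:
  assumes "finite F" "F \<subseteq> Kn_edges n"
  shows "n \<le> ncomp n F + card F"
  using assms
proof (induction F rule: finite_induct)
  case empty then show ?case by (simp add: ncomp_empty)
next
  case (insert e F)
  then obtain a b where ab: "a < n" "b < n" "a \<noteq> b" "e = {a, b}"
    by (auto elim: Kn_edgesE)
  have "n \<le> ncomp n F + card F" using insert by auto
  moreover have "ncomp n F \<le> ncomp n (insert e F) + 1"
    using ncomp_insert_ge[OF ab(1,2)] ab(4) by simp
  moreover have "card (insert e F) = card F + 1" using insert by simp
  ultimately show ?case by simp
qed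

lemma acyclic_mono: "F \<subseteq> G \<Longrightarrow> acyclic_graph G \<Longrightarrow> acyclic_graph F"
  unfolding acyclic_graph_def by blast

lemma rtrancl_set_path:
  assumes "(x, y) \<in> R\<^sup>*"
  obtains xs where "rtrancl_path (\<lambda>a b. (a, b) \<in> R) x xs y" "distinct (x # xs)"
proof -
  have "(\<lambda>a b. (a, b) \<in> R)\<^sup>*\<^sup>* x y" using assms by (simp add: rtranclp_rtrancl_eq)
  then obtain xs0 where "rtrancl_path (\<lambda>a b. (a, b) \<in> R) x xs0 y"
    by (auto simp: rtranclp_eq_rtrancl_path)
  then obtain xs where "rtrancl_path (\<lambda>a b. (a, b) \<in> R) x xs y" "distinct (x # xs)"
    by (rule rtrancl_path_distinct)
  then show ?thesis using that by blast
qed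

lemma path_cycle:
  assumes e: "{u, v} \<in> G" and uv: "u \<noteq> v"
    and r: "(u, v) \<in> (adj (G - {{u, v}}))\<^sup>*"
  shows "\<not> acyclic_graph G"
proof -
  obtain xs where p: "rtrancl_path (\<lambda>a b. (a, b) \<in> adj (G - {{u, v}})) u xs v"
    and d: "distinct (u # xs)"
    using rtrancl_set_path[OF r] by blast
  have ne: "xs \<noteq> []" using p uv by (auto elim: rtrancl_path.cases)
  have lastv: "last xs = v" using rtrancl_path_last[OF p ne] .
  have edges: "{(u # xs) ! i, xs ! i} \<in> G - {{u, v}}" "(u # xs) ! i \<noteq> xs ! i"
    if "i < length xs" for i
    using rtrancl_path_nth[OF p that] by (auto simp: adj_def)
  have len: "length xs \<ge> 2"
  proof (rule ccontr)
    assume "\<not> length xs \<ge> 2"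
    with ne have "length xs = 1" by (cases xs) (auto simp: Suc_le_eq)
    then have "xs = [v]" using lastv by (cases xs) auto
    then show False using edges[of 0] by simp
  qed
  define vs where "vs = u # xs"
  have lv: "length vs = length xs + 1" by (simp add: vs_def)
  have "\<forall>i<length vs. {vs ! i, vs ! ((i + 1) mod length vs)} \<in> G"
  proof (intro allI impI)
    fix i assume i: "i < length vs"
    show "{vs ! i, vs ! ((i + 1) mod length vs)} \<in> G"
    proof (cases "i < length xs")
      case True
      then have "(i + 1) mod length vs = i + 1" using lv by simp
      then show ?thesis using edges(1)[OF True] by (simp add: vs_def)
    next
      case False
      then have ii: "i = length xs" using i lv by simp
      then have "(i + 1) mod length vs = 0" using lv by simp
      moreover have "vs ! i = v" using ii lastv ne by (simp add: vs_def last_conv_nth)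
      ultimately show ?thesis using e by (simp add: vs_def insert_commute)
    qed
  qed
  moreover have "length vs \<ge> 3" using len lv by simp
  moreover have "distinct vs" using d by (simp add: vs_def)
  ultimately show ?thesis unfolding acyclic_graph_def by blast
qed

lemma count_forest:
  assumes "finite F" "F \<subseteq> Kn_edges n" "acyclic_graph F"
  shows "ncomp n F + card F = n"
  using assms
proof (induction F rule: finite_induct)
  case empty then show ?case by (simp add: ncomp_empty)
next
  case (insert e F)
  then obtain a b where ab: "a < n" "b < n" "a \<noteq> b" "e = {a, b}"
    by (auto elim: Kn_edgesE)
  have acF: "acyclic_graph F" using insert(5) acyclic_mono by blast
  have IH: "ncomp n F + card F = n" using insert acF by auto
  have "insert e F - {{a, b}} = F" using insert(2) ab(4) by auto
  then have nc: "(a, b) \<notin> (adj F)\<^sup>*"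
    using path_cycle[of a b "insert e F"] insert(5) ab by auto
  show ?case using ncomp_insert_nonconn[OF ab(1,2) nc] IH insert(1,2) ab(4) by simp
qed

lemma cycle_edge:
  assumes "\<not> acyclic_graph G"
  obtains u v where "{u, v} \<in> G" "u \<noteq> v" "(u, v) \<in> (adj (G - {{u, v}}))\<^sup>*"
proof -
  from assms obtain vs where vs: "length vs \<ge> 3" "distinct vs"
    "\<forall>i<length vs. {vs ! i, vs ! ((i + 1) mod length vs)} \<in> G"
    unfolding acyclic_graph_def by blast
  define L where "L = length vs"
  define e where "e = {vs ! 0, vs ! 1}"
  have dist: "vs ! i \<noteq> vs ! j" if "i < L" "j < L" "i \<noteq> j" for i j
    using vs(2) that by (simp add: L_def nth_eq_iff_index_eq)
  have vne: "vs \<noteq> []" using vs(1) by auto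
  have e0: "e \<in> G" using vs(3)[rule_format, of 0] vs(1) vne by (simp add: e_def)
  have step: "(vs ! j, vs ! (j + 1)) \<in> adj (G - {e})" if "1 \<le> j" "j + 1 < L" for j
  proof -
    have "{vs ! j, vs ! (j + 1)} \<in> G"
      using vs(3)[rule_format, of j] that by (simp add: L_def)
    moreover have "vs ! (j + 1) \<noteq> vs ! 0" "vs ! (j + 1) \<noteq> vs ! 1" "vs ! j \<noteq> vs ! (j+1)"
      using dist that by auto
    ultimately show ?thesis by (auto simp: adj_def e_def doubleton_eq_iff)
  qed
  have reach: "(vs ! 1, vs ! j) \<in> (adj (G - {e}))\<^sup>*" if "1 \<le> j" "j < L" for j
    using that
  proof (induction j)
    case 0 then show ?case by simp
  next
    case (Suc j)
    show ?case
    proof (cases "j = 0")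
      case True then show ?thesis by simp
    next
      case False
      then have "(vs ! 1, vs ! j) \<in> (adj (G - {e}))\<^sup>*" using Suc by simp
      moreover have "(vs ! j, vs ! (j + 1)) \<in> adj (G - {e})" using step False Suc by simp
      ultimately show ?thesis by simp
    qed
  qed
  have last: "(vs ! (L - 1), vs ! 0) \<in> adj (G - {e})"
  proof -
    have "(L - 1) + 1 = L" using vs(1) by (simp add: L_def)
    then have "((L - 1) + 1) mod L = 0" by simp
    then have inG: "{vs ! (L - 1), vs ! 0} \<in> G"
      using vs(3)[rule_format, of "L - 1"] vs(1) by (simp add: L_def)
    have LL: "L - 1 < L" "0 < L" "1 < L" "L - 1 \<noteq> 0" "L - 1 \<noteq> 1" using vs(1) L_def by auto
    moreover have "vs ! (L - 1) \<noteq> vs ! 0" by (rule dist) (use LL in auto)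
    moreover have "vs ! (L - 1) \<noteq> vs ! 1" by (rule dist) (use LL in auto)
    ultimately show ?thesis using inG by (auto simp: adj_def e_def doubleton_eq_iff)
  qed
  have "(vs ! 1, vs ! (L - 1)) \<in> (adj (G - {e}))\<^sup>*"
    using reach[of "L - 1"] vs(1) L_def by simp
  then have "(vs ! 1, vs ! 0) \<in> (adj (G - {e}))\<^sup>*"
    using last by (rule rtrancl.rtrancl_into_rtrancl)
  then have "(vs ! 0, vs ! 1) \<in> (adj (G - {e}))\<^sup>*" by (rule reach_sym)
  moreover have "vs ! 0 \<noteq> vs ! 1" by (rule dist) (use vs(1) L_def in auto)
  ultimately show ?thesis using that e0 e_def by blast
qed

lemma ncomp_connected:
  assumes "connected_on n F" "n \<ge> 1"
  shows "ncomp n F = 1"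
proof -
  have "cls n F x = {..<n}" if "x < n" for x
    using assms that by (auto simp: cls_def connected_on_def)
  then have "cls n F ` {..<n} = {{..<n}}" using assms(2) by force
  then show ?thesis by (simp add: ncomp_def)
qed

lemma conn_card_acyclic:
  assumes sub: "F \<subseteq> Kn_edges n" and con: "connected_on n F" and c: "card F = n - 1"
  shows "acyclic_graph F"
proof (rule ccontr)
  assume "\<not> acyclic_graph F"
  then obtain u v where e: "{u, v} \<in> F" "u \<noteq> v" "(u, v) \<in> (adj (F - {{u, v}}))\<^sup>*"
    by (rule cycle_edge)
  have fin: "finite F" using sub finite_Kn_edges finite_subset by blast
  define G where "G = F - {{u, v}}"
  have FG: "F = insert {u, v} G" using e(1) by (auto simp: G_def)
  have "(adj F)\<^sup>* = (adj G)\<^sup>*" unfolding FG by (rule reach_insert_conn) (use e(3) G_def in simp)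
  then have conG: "connected_on n G" using con by (simp add: connected_on_def)
  have "card F \<ge> 1" using fin e(1) by (metis One_nat_def Suc_leI card_gt_0_iff empty_iff)
  then have n2: "n \<ge> 2" using c by simp
  have "n \<le> ncomp n G + card G"
    using count_lower[of G n] fin sub by (auto simp: G_def)
  moreover have "ncomp n G = 1" using ncomp_connected[OF conG] n2 by simp
  moreover have "card G = n - 2" using c e(1) fin by (simp add: G_def)
  ultimately show False using n2 by simp
qed

lemma spanning_tree_iff:
  assumes "n \<ge> 1"
  shows "spanning_tree n T \<longleftrightarrow> T \<subseteq> Kn_edges n \<and> connected_on n T \<and> card T = n - 1"
proof
  assume st: "spanning_tree n T"
  then have sub: "T \<subseteq> Kn_edges n" and con: "connected_on n T" and ac: "acyclic_graph T"
    by (auto simp: spanning_tree_def)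
  have fin: "finite T" using sub finite_Kn_edges finite_subset by blast
  have "ncomp n T + card T = n" by (rule count_forest[OF fin sub ac])
  then show "T \<subseteq> Kn_edges n \<and> connected_on n T \<and> card T = n - 1"
    using ncomp_connected[OF con assms] sub con by simp
next
  assume "T \<subseteq> Kn_edges n \<and> connected_on n T \<and> card T = n - 1"
  then show "spanning_tree n T" using conn_card_acyclic by (auto simp: spanning_tree_def)
qed

definition img :: "(nat \<Rightarrow> nat) \<Rightarrow> nat set set \<Rightarrow> nat set set" where
  "img \<sigma> T = (\<lambda>e. \<sigma> ` e) ` T"

lemma perm_reach:
  assumes "(x, y) \<in> (adj T)\<^sup>*" "inj \<sigma>"
  shows "(\<sigma> x, \<sigma> y) \<in> (adj (img \<sigma> T))\<^sup>*"
  using assms(1)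
proof (induction rule: rtrancl_induct)
  case base then show ?case by simp
next
  case (step y z)
  then have "{y, z} \<in> T" "y \<noteq> z" by (auto simp: adj_def)
  then have "{\<sigma> y, \<sigma> z} \<in> img \<sigma> T" "\<sigma> y \<noteq> \<sigma> z"
    using assms(2) by (auto simp: img_def inj_eq intro!: image_eqI[where x="{y,z}"])
  then have "(\<sigma> y, \<sigma> z) \<in> adj (img \<sigma> T)" by (simp add: adj_def)
  with step show ?case by simp
qed

lemma perm_tree:
  assumes p: "\<sigma> permutes {..<n}" and n: "n \<ge> 1" and st: "spanning_tree n T"
  shows "spanning_tree n (img \<sigma> T)"
proof -
  have T: "T \<subseteq> Kn_edges n" "connected_on n T" "card T = n - 1"
    using st spanning_tree_iff[OF n] by auto
  have inj: "inj \<sigma>" using permutes_inj[OF p] .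
  have sub: "img \<sigma> T \<subseteq> Kn_edges n"
  proof
    fix e' assume "e' \<in> img \<sigma> T"
    then obtain e where e: "e \<in> T" "e' = \<sigma> ` e" by (auto simp: img_def)
    then obtain a b where ab: "a < n" "b < n" "a \<noteq> b" "e = {a, b}"
      using T(1) Kn_edgesE[of e n] by blast
    have "\<sigma> a < n" "\<sigma> b < n" using ab permutes_in_image[OF p] by auto
    moreover have "\<sigma> a \<noteq> \<sigma> b" using ab inj by (auto simp: inj_eq)
    ultimately show "e' \<in> Kn_edges n" using e ab by (auto intro: Kn_edgesI)
  qed
  have "inj_on (\<lambda>e. \<sigma> ` e) T" using inj by (auto simp: inj_on_def inj_image_eq_iff)
  then have card: "card (img \<sigma> T) = n - 1" using T(3) by (simp add: img_def card_image)
  have con: "connected_on n (img \<sigma> T)"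
    unfolding connected_on_def
  proof (intro allI impI)
    fix a b assume ab: "a < n" "b < n"
    have "inv \<sigma> a < n" "inv \<sigma> b < n"
      using ab permutes_in_image[OF permutes_inv[OF p]] by auto
    then have "(inv \<sigma> a, inv \<sigma> b) \<in> (adj T)\<^sup>*" using T(2) by (auto simp: connected_on_def)
    from perm_reach[OF this inj] show "(a, b) \<in> (adj (img \<sigma> T))\<^sup>*"
      by (simp add: permutes_inverses[OF p])
  qed
  show ?thesis using sub card con spanning_tree_iff[OF n] by auto
qed

lemma img_inv:
  assumes p: "\<sigma> permutes {..<n}"
  shows "img (inv \<sigma>) (img \<sigma> T) = T"
  by (simp add: img_def image_image permutes_inverses[OF p])

lemma perm_bij:
  assumes p: "\<sigma> permutes {..<n}" and n: "n \<ge> 1"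
  shows "bij_betw (img \<sigma>) (spanning_trees n) (spanning_trees n)"
proof (rule bij_betw_byWitness[where f'="img (inv \<sigma>)"])
  have pi: "inv \<sigma> permutes {..<n}" using permutes_inv[OF p] .
  have ii: "inv (inv \<sigma>) = \<sigma>" using p by (simp add: permutes_inv_inv)
  show "\<forall>a\<in>spanning_trees n. img (inv \<sigma>) (img \<sigma> a) = a" using img_inv[OF p] by simp
  show "\<forall>a'\<in>spanning_trees n. img \<sigma> (img (inv \<sigma>) a') = a'"
    using img_inv[OF pi] ii by simp
  show "img \<sigma> ` spanning_trees n \<subseteq> spanning_trees n"
    using perm_tree[OF p n] by (auto simp: spanning_trees_def)
  show "img (inv \<sigma>) ` spanning_trees n \<subseteq> spanning_trees n"
    using perm_tree[OF pi n] by (auto simp: spanning_trees_def)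
qed

lemma perm_sum:
  assumes p: "\<sigma> permutes {..<n}" and n: "n \<ge> 1"
  shows "(\<Sum>T\<in>spanning_trees n. g (img \<sigma> T)) = (\<Sum>T\<in>spanning_trees n. g T)"
  using sum.reindex_bij_betw[OF perm_bij[OF p n], of g] .

lemma img_mem:
  assumes "inj \<sigma>"
  shows "\<sigma> ` e \<in> img \<sigma> T \<longleftrightarrow> e \<in> T"
  using assms by (auto simp: img_def inj_image_eq_iff)

lemma perm_exists:
  assumes "distinct xs" "distinct ys" "length xs = length ys"
    "set xs \<subseteq> {..<n}" "set ys \<subseteq> {..<n}"
  shows "\<exists>\<sigma>. \<sigma> permutes {..<n} \<and> map \<sigma> xs = ys"
  using assms
proof (induction xs arbitrary: ys)
  case Nil then show ?case by (auto intro: permutes_id)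
next
  case (Cons x xs)
  then obtain y ys' where ys: "ys = y # ys'" by (cases ys) auto
  with Cons have "\<exists>\<tau>. \<tau> permutes {..<n} \<and> map \<tau> xs = ys'" by auto
  then obtain \<tau> where \<tau>: "\<tau> permutes {..<n}" "map \<tau> xs = ys'" by blast
  define z where "z = \<tau> x"
  have z: "z < n" using permutes_in_image[OF \<tau>(1), of x] Cons(5) by (simp add: z_def)
  have y: "y < n" using Cons(6) ys by simp
  have zn: "z \<notin> set ys'"
  proof
    assume "z \<in> set ys'"
    then obtain x' where "x' \<in> set xs" "\<tau> x' = \<tau> x" using \<tau>(2) z_def by auto
    then show False using Cons(2) permutes_inj[OF \<tau>(1)] by (auto simp: inj_eq)
  qed
  have yn: "y \<notin> set ys'" using Cons(3) ys by simp
  define \<sigma> where "\<sigma> = Transposition.transpose z y \<circ> \<tau>"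
  have "\<sigma> permutes {..<n}" unfolding \<sigma>_def
    by (rule permutes_compose[OF \<tau>(1)]) (rule permutes_swap_id; use z y in simp)
  moreover have "map \<sigma> (x # xs) = ys"
  proof -
    have "\<sigma> x = y" by (simp add: \<sigma>_def z_def)
    moreover have "map \<sigma> xs = ys'"
    proof -
      have "map \<sigma> xs = map (Transposition.transpose z y) ys'" by (simp add: \<sigma>_def \<tau>(2)[symmetric])
      also have "\<dots> = ys'"
        using zn yn by (induction ys') (auto simp: Transposition.transpose_def)
      finally show ?thesis .
    qed
    ultimately show ?thesis using ys by simp
  qed
  ultimately show ?case by blast
qed

definition Nb :: "nat \<Rightarrow> nat set set \<Rightarrow> nat set" where
  "Nb b T = {w. {b, w} \<in> T}"

definition deg :: "nat \<Rightarrow> nat set set \<Rightarrow> nat" where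
  "deg b T = card (Nb b T)"

definition good :: "nat \<Rightarrow> nat \<Rightarrow> nat set set \<Rightarrow> nat \<Rightarrow> nat \<Rightarrow> bool" where
  "good n b T w x \<longleftrightarrow> {b, w} \<in> T \<and> x < n \<and> x \<noteq> b \<and> (x, b) \<in> (adj (T - {{b, w}}))\<^sup>*"

definition phi :: "nat \<Rightarrow> nat set set \<Rightarrow> nat \<Rightarrow> nat \<Rightarrow> nat set set" where
  "phi b T w x = insert {w, x} (T - {{b, w}})"

lemma st_sub: "spanning_tree n T \<Longrightarrow> T \<subseteq> Kn_edges n"
  by (simp add: spanning_tree_def)

lemma st_finite: "spanning_tree n T \<Longrightarrow> finite T"
  using st_sub finite_Kn_edges finite_subset by blast

lemma finite_trees: "finite (spanning_trees n)"
proof -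
  have "spanning_trees n \<subseteq> Pow (Kn_edges n)" by (auto simp: spanning_trees_def dest: st_sub)
  then show ?thesis using finite_Kn_edges by (meson finite_Pow_iff finite_subset)
qed

lemma tree_edge_nonconn:
  assumes "spanning_tree n T" "{u, v} \<in> T" "u \<noteq> v"
  shows "(u, v) \<notin> (adj (T - {{u, v}}))\<^sup>*"
  using path_cycle[of u v T] assms by (auto simp: spanning_tree_def)

lemma Nb_sub:
  assumes "T \<subseteq> Kn_edges n"
  shows "Nb b T \<subseteq> {..<n} - {b}"
proof
  fix w assume "w \<in> Nb b T"
  then have "{b, w} \<in> Kn_edges n" using assms by (auto simp: Nb_def)
  then obtain a c where "a < n" "c < n" "a \<noteq> c" "{b, w} = {a, c}" by (rule Kn_edgesE)
  then show "w \<in> {..<n} - {b}" by (auto simp: doubleton_eq_iff)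
qed

lemma finite_Nb: "T \<subseteq> Kn_edges n \<Longrightarrow> finite (Nb b T)"
  using Nb_sub by (meson finite_Diff finite_lessThan finite_subset)

lemma claimA:
  assumes st: "spanning_tree n T" and g: "good n b T w x"
  shows "spanning_tree n (phi b T w x)" "{w, x} \<notin> T" "w \<noteq> b" "x \<noteq> w"
    "(w, b) \<notin> (adj (T - {{b, w}}))\<^sup>*"
proof -
  define F where "F = T - {{b, w}}"
  have sub: "T \<subseteq> Kn_edges n" using st st_sub by blast
  have bw: "{b, w} \<in> T" and x: "x < n" "x \<noteq> b" and xb: "(x, b) \<in> (adj F)\<^sup>*"
    using g by (auto simp: good_def F_def)
  have wN: "w \<in> {..<n} - {b}" using Nb_sub[OF sub] bw by (auto simp: Nb_def)
  then show wb: "w \<noteq> b" by simp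
  have nc: "(b, w) \<notin> (adj F)\<^sup>*" using tree_edge_nonconn[OF st bw] wb F_def by auto
  then show nc': "(w, b) \<notin> (adj (T - {{b, w}}))\<^sup>*" using reach_sym F_def by blast
  show xw: "x \<noteq> w" using xb nc' F_def by auto
  have wxF: "{w, x} \<notin> F"
  proof
    assume "{w, x} \<in> F"
    then have "(w, x) \<in> (adj F)\<^sup>*" by (rule reach_edge)
    then have "(w, b) \<in> (adj F)\<^sup>*" using xb by (rule rtrancl_trans)
    then show False using nc' F_def by simp
  qed
  moreover have "{w, x} \<noteq> {b, w}" using x wb by (auto simp: doubleton_eq_iff)
  ultimately show wxT: "{w, x} \<notin> T" by (auto simp: F_def)
  have n1: "n \<ge> 1" using x by simp
  have cT: "card T = n - 1" "connected_on n T" using st spanning_tree_iff[OF n1] by auto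
  have finT: "finite T" using st st_finite by blast
  have cardF: "card F = n - 2" using cT finT bw by (simp add: F_def)
  have "{b, w} \<in> Kn_edges n" using sub bw by auto
  then have bn: "b < n" by (auto elim!: Kn_edgesE simp: doubleton_eq_iff)
  then have n2: "n \<ge> 2" using x by auto
  have sub': "phi b T w x \<subseteq> Kn_edges n"
    using sub wN x xw by (auto simp: phi_def F_def intro: Kn_edgesI)
  have card': "card (phi b T w x) = n - 1"
  proof -
    have "finite F" using finT by (simp add: F_def)
    then show ?thesis using wxF cardF n2 by (simp add: phi_def F_def[symmetric])
  qed
  have Fsub: "F \<subseteq> phi b T w x" by (auto simp: phi_def F_def)
  have toB: "(y, b) \<in> (adj (phi b T w x))\<^sup>*" if y: "y < n" for y
  proof -
    have "(y, b) \<in> (adj T)\<^sup>*" using cT(2) y bn by (auto simp: connected_on_def)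
    moreover have "T = insert {b, w} F" using bw by (auto simp: F_def)
    ultimately have "(y, b) \<in> (adj (insert {b, w} F))\<^sup>*" by simp
    from reach_insert[OF this] show ?thesis
    proof (elim disjE conjE)
      assume "(y, b) \<in> (adj F)\<^sup>*"
      then show ?thesis using reach_mono[OF Fsub] by blast
    next
      assume "(y, b) \<in> (adj F)\<^sup>*" "(w, b) \<in> (adj F)\<^sup>*"
      then show ?thesis using reach_mono[OF Fsub] by blast
    next
      assume "(y, w) \<in> (adj F)\<^sup>*"
      then have "(y, w) \<in> (adj (phi b T w x))\<^sup>*" using reach_mono[OF Fsub] by blast
      moreover have "(w, x) \<in> (adj (phi b T w x))\<^sup>*" by (rule reach_edge) (simp add: phi_def)
      moreover have "(x, b) \<in> (adj (phi b T w x))\<^sup>*" using xb reach_mono[OF Fsub] by blast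
      ultimately show ?thesis by (meson rtrancl_trans)
    qed
  qed
  have con': "connected_on n (phi b T w x)"
    unfolding connected_on_def using toB reach_sym by (meson rtrancl_trans)
  show "spanning_tree n (phi b T w x)" using spanning_tree_iff[OF n1] sub' card' con' by simp
qed

lemma claimD:
  assumes st: "spanning_tree n T" and g: "good n b T w x"
  shows "deg b (phi b T w x) + 1 = deg b T"
proof -
  have bw: "{b, w} \<in> T" and x: "x \<noteq> b" using g by (auto simp: good_def)
  have wb: "w \<noteq> b" using claimA[OF st g] by simp
  have "Nb b (phi b T w x) = Nb b T - {w}"
    using x wb by (auto simp: Nb_def phi_def doubleton_eq_iff)
  moreover have "w \<in> Nb b T" using bw by (simp add: Nb_def)
  moreover have "finite (Nb b T)" using finite_Nb st_sub[OF st] by blast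
  ultimately show ?thesis unfolding deg_def
    by (metis Suc_eq_plus1 card_Suc_Diff1)
qed

lemma claimC:
  assumes st: "spanning_tree n T" and x: "x < n" "x \<noteq> b" and b: "b < n"
  shows "deg b T \<le> card {w. good n b T w x} + 1"
proof -
  define G where "G = {w. good n b T w x}"
  have finN: "finite (Nb b T)" using finite_Nb st_sub[OF st] by blast
  have GN: "G \<subseteq> Nb b T" by (auto simp: G_def good_def Nb_def)
  have n1: "n \<ge> 1" using x by simp
  have con: "connected_on n T" using st by (simp add: spanning_tree_def)
  have xbT: "(x, b) \<in> (adj T)\<^sup>*" using con x b by (auto simp: connected_on_def)
  have one: "w1 = w2" if w1: "w1 \<in> Nb b T - G" and w2: "w2 \<in> Nb b T - G" for w1 w2
  proof (rule ccontr)
    assume ne: "w1 \<noteq> w2"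
    have e1: "{b, w1} \<in> T" and e2: "{b, w2} \<in> T" using w1 w2 by (auto simp: Nb_def)
    have bad1: "(x, b) \<notin> (adj (T - {{b, w1}}))\<^sup>*" using w1 x by (auto simp: G_def good_def Nb_def)
    have bad2: "(x, b) \<notin> (adj (T - {{b, w2}}))\<^sup>*" using w2 x by (auto simp: G_def good_def Nb_def)
    define F1 where "F1 = T - {{b, w1}}"
    define F2 where "F2 = T - {{b, w2}}"
    define H where "H = F1 - {{b, w2}}"
    have neq: "{b, w1} \<noteq> {b, w2}" using ne by (auto simp: doubleton_eq_iff)
    have "T = insert {b, w1} F1" using e1 by (auto simp: F1_def)
    then have "(x, b) \<in> (adj (insert {b, w1} F1))\<^sup>*" using xbT by simp
    from reach_insert[OF this] have xw1: "(x, w1) \<in> (adj F1)\<^sup>*"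
      using bad1 F1_def by auto
    have "F1 = insert {b, w2} H" using e2 neq by (auto simp: F1_def H_def)
    then have "(x, w1) \<in> (adj (insert {b, w2} H))\<^sup>*" using xw1 by simp
    have HF1: "H \<subseteq> F1" and HF2: "H \<subseteq> F2" by (auto simp: H_def F1_def F2_def)
    have w1F2: "(w1, b) \<in> (adj F2)\<^sup>*"
      using reach_edge[of w1 b F2] e1 neq by (auto simp: F2_def insert_commute)
    have w2F1: "(w2, b) \<in> (adj F1)\<^sup>*"
      using reach_edge[of w2 b F1] e2 neq by (auto simp: F1_def insert_commute)
    from reach_insert[OF \<open>(x, w1) \<in> (adj (insert {b, w2} H))\<^sup>*\<close>] show False
    proof (elim disjE conjE)
      assume "(x, w1) \<in> (adj H)\<^sup>*"
      then have "(x, w1) \<in> (adj F2)\<^sup>*" using reach_mono[OF HF2] by blast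
      then have "(x, b) \<in> (adj F2)\<^sup>*" using w1F2 by (rule rtrancl_trans)
      then show False using bad2 F2_def by simp
    next
      assume "(x, b) \<in> (adj H)\<^sup>*"
      then have "(x, b) \<in> (adj F1)\<^sup>*" using reach_mono[OF HF1] by blast
      then show False using bad1 F1_def by simp
    next
      assume "(x, w2) \<in> (adj H)\<^sup>*"
      then have "(x, w2) \<in> (adj F1)\<^sup>*" using reach_mono[OF HF1] by blast
      then have "(x, b) \<in> (adj F1)\<^sup>*" using w2F1 by (rule rtrancl_trans)
      then show False using bad1 F1_def by simp
    qed
  qed
  have "card (Nb b T - G) \<le> 1"
    using one finN by (simp add: card_le_Suc0_iff_eq)
  moreover have "card (Nb b T) \<le> card G + card (Nb b T - G)"
    by (metis Diff_partition GN card_Un_le)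
  ultimately show ?thesis unfolding deg_def G_def[symmetric] by simp
qed

lemma claimB:
  assumes st1: "spanning_tree n T1" and g1: "good n b T1 w1 x1"
    and st2: "spanning_tree n T2" and g2: "good n b T2 w2 x2"
    and eq: "phi b T1 w1 x1 = phi b T2 w2 x2" and ed: "{w1, x1} = {w2, x2}"
  shows "T1 = T2 \<and> w1 = w2 \<and> x1 = x2"
proof -
  have A1: "{w1, x1} \<notin> T1" "(w1, b) \<notin> (adj (T1 - {{b, w1}}))\<^sup>*" using claimA[OF st1 g1] by auto
  have A2: "{w2, x2} \<notin> T2" using claimA[OF st2 g2] by auto
  have F1: "T1 - {{b, w1}} = phi b T1 w1 x1 - {{w1, x1}}" using A1(1) by (auto simp: phi_def)
  have F2: "T2 - {{b, w2}} = phi b T2 w2 x2 - {{w2, x2}}" using A2(1) by (auto simp: phi_def)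
  have e1: "{b, w1} \<in> T1" and e2: "{b, w2} \<in> T2" using g1 g2 by (auto simp: good_def)
  have T1: "T1 = insert {b, w1} (T1 - {{b, w1}})" using e1 by auto
  have T2: "T2 = insert {b, w2} (T2 - {{b, w2}})" using e2 by auto
  have "(w1 = w2 \<and> x1 = x2) \<or> (w1 = x2 \<and> x1 = w2)" using ed by (auto simp: doubleton_eq_iff)
  then show ?thesis
  proof
    assume "w1 = w2 \<and> x1 = x2"
    then show ?thesis using T1 T2 F1 F2 eq by metis
  next
    assume s: "w1 = x2 \<and> x1 = w2"
    have "T2 - {{b, w2}} = T1 - {{b, w1}}" using F1 F2 eq ed by simp
    moreover have "(x2, b) \<in> (adj (T2 - {{b, w2}}))\<^sup>*" using g2 by (simp add: good_def)
    ultimately show ?thesis using A1(2) s by simp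
  qed
qed

lemma deg_le: "T \<subseteq> Kn_edges n \<Longrightarrow> b < n \<Longrightarrow> deg b T \<le> n - 1"
proof -
  assume "T \<subseteq> Kn_edges n" "b < n"
  then have "card (Nb b T) \<le> card ({..<n} - {b})" using Nb_sub by (intro card_mono) auto
  then show ?thesis using \<open>b < n\<close> by (simp add: deg_def)
qed

lemma switch_bound:
  assumes b: "b < n"
  shows "(\<Sum>T\<in>spanning_trees n. deg b T * (deg b T - 1)) \<le> 6 * card (spanning_trees n)"
proof (cases "n \<ge> 2")
  case False
  then have "n = 1" using b by simp
  have "deg b T = 0" if "T \<in> spanning_trees n" for T
    using deg_le[of T n b] that b \<open>n = 1\<close> by (auto simp: spanning_trees_def spanning_tree_def)
  then show ?thesis by simp
next
  case n2: True
  define S where "S = spanning_trees n"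
  define V where "V = {..<n} - {b}"
  define W where "W T x = {w. good n b T w x}" for T x
  define Tr where "Tr = Sigma S (\<lambda>T. Sigma V (W T))"
  define ph where "ph t = (case t of (T, (x, w)) \<Rightarrow> phi b T w x)" for t
  have finS: "finite S" using finite_trees by (simp add: S_def)
  have finV: "finite V" by (simp add: V_def)
  have cardV: "card V = n - 1" using b by (simp add: V_def)
  have WN: "W T x \<subseteq> Nb b T" for T x by (auto simp: W_def good_def Nb_def)
  have finW: "finite (W T x)" if "T \<in> S" for T x
    using finite_Nb[OF st_sub] that WN by (simp add: S_def spanning_trees_def) (meson finite_subset)
  have finSig: "finite (Sigma V (W T))" if "T \<in> S" for T
    using finV finW that by auto
  have finTr: "finite Tr" unfolding Tr_def using finS finSig by auto
  define X where "X = (\<Sum>T\<in>S. deg b T * (deg b T - 1))"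
  define Y where "Y = (\<Sum>T\<in>S. deg b T + 1)"
  have sumTr: "(\<Sum>t\<in>Tr. deg b (fst t)) = (\<Sum>T\<in>S. card (Sigma V (W T)) * deg b T)"
  proof -
    have "(\<Sum>t\<in>Tr. deg b (fst t)) = (\<Sum>T\<in>S. \<Sum>p\<in>Sigma V (W T). deg b T)"
      unfolding Tr_def using sum.Sigma[OF finS, of "\<lambda>T. Sigma V (W T)" "\<lambda>T p. deg b T"] finSig
      by (simp add: split_def)
    then show ?thesis by simp
  qed
  have low: "(n - 1) * X \<le> (\<Sum>t\<in>Tr. deg b (fst t))"
  proof -
    have "(n - 1) * (deg b T - 1) \<le> card (Sigma V (W T))" if T: "T \<in> S" for T
    proof -
      have st: "spanning_tree n T" using T by (simp add: S_def spanning_trees_def)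
      have "(\<Sum>x\<in>V. deg b T - 1) \<le> (\<Sum>x\<in>V. card (W T x))"
      proof (intro sum_mono)
        fix x assume "x \<in> V"
        then have "deg b T \<le> card (W T x) + 1" using claimC[OF st _ _ b, of x] by (auto simp: V_def W_def)
        then show "deg b T - 1 \<le> card (W T x)" by simp
      qed
      then show ?thesis using card_SigmaI[OF finV, of "W T"] finW[OF T] cardV by simp
    qed
    then have "(\<Sum>T\<in>S. (n - 1) * (deg b T - 1) * deg b T) \<le> (\<Sum>T\<in>S. card (Sigma V (W T)) * deg b T)"
      by (intro sum_mono mult_right_mono) auto
    then show ?thesis unfolding sumTr X_def sum_distrib_left by (simp add: ac_simps)
  qed
  have up: "(\<Sum>t\<in>Tr. deg b (fst t)) \<le> (n - 1) * Y"
  proof -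
    have img: "ph ` Tr \<subseteq> S"
      using claimA(1) by (auto simp: Tr_def ph_def S_def spanning_trees_def W_def)
    have "(\<Sum>t\<in>Tr. deg b (fst t)) = (\<Sum>T'\<in>S. \<Sum>t\<in>{t. t \<in> Tr \<and> ph t = T'}. deg b (fst t))"
      using sum.group[OF finTr finS img, of "\<lambda>t. deg b (fst t)"] by simp
    also have "\<dots> \<le> (\<Sum>T'\<in>S. (n - 1) * (deg b T' + 1))"
    proof (intro sum_mono)
      fix T' assume T': "T' \<in> S"
      define Fib where "Fib = {t. t \<in> Tr \<and> ph t = T'}"
      have stT': "spanning_tree n T'" using T' by (simp add: S_def spanning_trees_def)
      have degeq: "deg b (fst t) = deg b T' + 1" if "t \<in> Fib" for t
        using that claimD by (auto simp: Fib_def Tr_def ph_def S_def spanning_trees_def W_def)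
      have finFib: "finite Fib" using finTr by (simp add: Fib_def)
      have "inj_on (\<lambda>t. case t of (T, (x, w)) \<Rightarrow> {w, x}) Fib"
      proof (rule inj_onI)
        fix t1 t2 assume t1: "t1 \<in> Fib" and t2: "t2 \<in> Fib"
          and eq: "(case t1 of (T, (x, w)) \<Rightarrow> {w, x}) = (case t2 of (T, (x, w)) \<Rightarrow> {w, x})"
        obtain T1 x1 w1 where t1e: "t1 = (T1, (x1, w1))" by (cases t1) auto
        obtain T2 x2 w2 where t2e: "t2 = (T2, (x2, w2))" by (cases t2) auto
        have "spanning_tree n T1" "good n b T1 w1 x1" "spanning_tree n T2" "good n b T2 w2 x2"
          "phi b T1 w1 x1 = phi b T2 w2 x2" "{w1, x1} = {w2, x2}"
          using t1 t2 eq t1e t2e by (auto simp: Fib_def Tr_def ph_def S_def spanning_trees_def W_def)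
        from claimB[OF this] show "t1 = t2" using t1e t2e by simp
      qed
      moreover have "(\<lambda>t. case t of (T, (x, w)) \<Rightarrow> {w, x}) ` Fib \<subseteq> T'"
        by (auto simp: Fib_def ph_def phi_def)
      ultimately have "card Fib \<le> card T'"
        using st_finite[OF stT'] by (meson card_inj_on_le)
      also have "card T' = n - 1" using stT' spanning_tree_iff[of n T'] n2 by simp
      finally have cF: "card Fib \<le> n - 1" .
      have "(\<Sum>t\<in>Fib. deg b (fst t)) = card Fib * (deg b T' + 1)"
        using degeq by simp
      also have "\<dots> \<le> (n - 1) * (deg b T' + 1)" using cF by (rule mult_right_mono) simp
      finally show "(\<Sum>t\<in>{t. t \<in> Tr \<and> ph t = T'}. deg b (fst t)) \<le> (n - 1) * (deg b T' + 1)"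
        by (simp add: Fib_def)
    qed
    finally show ?thesis by (simp add: Y_def sum_distrib_left)
  qed
  have "(n - 1) * X \<le> (n - 1) * Y" using low up by (rule le_trans)
  moreover have "n - 1 > 0" using n2 by simp
  ultimately have XY: "X \<le> Y" by simp
  have pt: "2 * (d + 1) \<le> d * (d - 1) + 6" for d :: nat
  proof (cases "d \<le> 2")
    case True then show ?thesis by (cases d; cases "d - 1") auto
  next
    case False
    define e where "e = d - 3"
    have "d = e + 3" using False by (simp add: e_def)
    then show ?thesis by (simp add: algebra_simps)
  qed
  have "2 * Y \<le> X + 6 * card S"
  proof -
    have "2 * Y = (\<Sum>T\<in>S. 2 * (deg b T + 1))" by (simp add: Y_def sum_distrib_left)
    also have "\<dots> \<le> (\<Sum>T\<in>S. deg b T * (deg b T - 1) + 6)" by (intro sum_mono pt)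
    also have "\<dots> = X + 6 * card S" by (simp add: X_def sum.distrib)
    finally show ?thesis .
  qed
  with XY have "X \<le> 6 * card S" by simp
  then show ?thesis by (simp add: X_def S_def)
qed

definition cnt2 :: "nat \<Rightarrow> nat set \<Rightarrow> nat set \<Rightarrow> real" where
  "cnt2 n e f = (\<Sum>T\<in>spanning_trees n. of_bool (e \<in> T \<and> f \<in> T))"

lemma card_Kn_edges: "card (Kn_edges n) = n choose 2"
proof -
  have "Kn_edges n = {e. e \<subseteq> {..<n} \<and> card e = 2}"
    by (auto simp: Kn_edges_def card_2_iff)
  then show ?thesis using n_subsets[of "{..<n}" 2] by simp
qed

lemma real_choose2: "real (n choose 2) = real n * (real n - 1) / 2"
proof (induction n)
  case 0 then show ?case by simp
next
  case (Suc n)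
  have "Suc n choose 2 = (n choose 1) + (n choose 2)"
    by (metis Suc_1 binomial_Suc_Suc)
  then show ?case using Suc by (simp add: field_simps)
qed

lemma star_tree:
  assumes "n \<ge> 1"
  shows "spanning_tree n ((\<lambda>c. {0, c}) ` {1..<n})"
proof -
  define T where "T = (\<lambda>c. {0::nat, c}) ` {1..<n}"
  have sub: "T \<subseteq> Kn_edges n" using assms by (auto simp: T_def intro!: Kn_edgesI)
  have "inj_on (\<lambda>c. {0::nat, c}) {1..<n}" by (auto simp: inj_on_def doubleton_eq_iff)
  then have card: "card T = n - 1" by (simp add: T_def card_image)
  have "(c, 0) \<in> (adj T)\<^sup>*" if "c < n" for c
  proof (cases "c = 0")
    case False
    then have "{c, 0} \<in> T" using that by (auto simp: T_def insert_commute)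
    then show ?thesis by (rule reach_edge)
  qed simp
  then have "connected_on n T" unfolding connected_on_def
  proof (intro allI impI)
    fix a c assume h: "\<And>c. c < n \<Longrightarrow> (c, 0) \<in> (adj T)\<^sup>*" and a: "a < n" and c: "c < n"
    have "(a, 0) \<in> (adj T)\<^sup>*" using h a by blast
    moreover have "(0, c) \<in> (adj T)\<^sup>*" using h[OF c] reach_sym by blast
    ultimately show "(a, c) \<in> (adj T)\<^sup>*" by (rule rtrancl_trans)
  qed
  then show ?thesis using spanning_tree_iff[OF assms] sub card by (simp add: T_def)
qed

lemma trees_nonempty: "n \<ge> 1 \<Longrightarrow> spanning_trees n \<noteq> {}"
  using star_tree by (auto simp: spanning_trees_def)

lemma cnt2_perm:
  assumes p: "\<sigma> permutes {..<n}" and n: "n \<ge> 1"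
  shows "cnt2 n (\<sigma> ` e) (\<sigma> ` f) = cnt2 n e f"
proof -
  have inj: "inj \<sigma>" using permutes_inj[OF p] .
  have "cnt2 n (\<sigma> ` e) (\<sigma> ` f) =
      (\<Sum>T\<in>spanning_trees n. of_bool (\<sigma> ` e \<in> img \<sigma> T \<and> \<sigma> ` f \<in> img \<sigma> T))"
    unfolding cnt2_def by (rule perm_sum[OF p n, symmetric])
  also have "\<dots> = cnt2 n e f" by (simp add: img_mem[OF inj] cnt2_def)
  finally show ?thesis .
qed

lemma sum_mem_card:
  assumes "T \<subseteq> Kn_edges n"
  shows "(\<Sum>e\<in>Kn_edges n. (of_bool (e \<in> T) :: real)) = real (card T)"
proof -
  have "Kn_edges n \<inter> {e. e \<in> T} = T" using assms by auto
  moreover have "(\<Sum>e\<in>Kn_edges n. (of_bool (e \<in> T) :: real)) = real (card (Kn_edges n \<inter> {e. e \<in> T}))"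
    using sum_of_bool_eq[of "Kn_edges n" "\<lambda>e. e \<in> T"] finite_Kn_edges by simp
  ultimately show ?thesis by simp
qed

lemma tree_card: "n \<ge> 1 \<Longrightarrow> T \<in> spanning_trees n \<Longrightarrow> card T = n - 1"
  using spanning_tree_iff by (auto simp: spanning_trees_def)

lemma sum_cnt1:
  assumes n: "n \<ge> 1"
  shows "(\<Sum>e\<in>Kn_edges n. cnt2 n e e) = real (n - 1) * card (spanning_trees n)"
proof -
  have "(\<Sum>e\<in>Kn_edges n. cnt2 n e e) =
      (\<Sum>T\<in>spanning_trees n. \<Sum>e\<in>Kn_edges n. of_bool (e \<in> T))"
    unfolding cnt2_def by (simp add: conj_absorb) (rule sum.swap)
  also have "\<dots> = (\<Sum>T\<in>spanning_trees n. real (n - 1))"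
    using sum_mem_card tree_card[OF n] by (intro sum.cong) (auto simp: spanning_trees_def st_sub)
  finally show ?thesis by simp
qed

lemma sum_cnt2_row:
  assumes n: "n \<ge> 1"
  shows "(\<Sum>f\<in>Kn_edges n. cnt2 n e f) = real (n - 1) * cnt2 n e e"
proof -
  have "(\<Sum>f\<in>Kn_edges n. cnt2 n e f) =
      (\<Sum>T\<in>spanning_trees n. \<Sum>f\<in>Kn_edges n. of_bool (e \<in> T) * of_bool (f \<in> T))"
    unfolding cnt2_def by (simp only: of_bool_conj) (rule sum.swap)
  also have "\<dots> = (\<Sum>T\<in>spanning_trees n. of_bool (e \<in> T) * (\<Sum>f\<in>Kn_edges n. of_bool (f \<in> T)))"
    by (simp add: sum_distrib_left)
  also have "\<dots> = (\<Sum>T\<in>spanning_trees n. of_bool (e \<in> T) * real (n - 1))"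
    using sum_mem_card tree_card[OF n] by (intro sum.cong) (auto simp: spanning_trees_def st_sub)
  also have "\<dots> = real (n - 1) * (\<Sum>T\<in>spanning_trees n. of_bool (e \<in> T))"
    unfolding sum_distrib_left by (simp add: mult.commute)
  finally show ?thesis by (simp add: cnt2_def)
qed

lemma cnt1_const:
  assumes n: "n \<ge> 1" and e: "e \<in> Kn_edges n" and f: "f \<in> Kn_edges n"
  shows "cnt2 n e e = cnt2 n f f"
proof -
  obtain a b where ab: "a < n" "b < n" "a \<noteq> b" "e = {a, b}" using e by (rule Kn_edgesE)
  obtain c d where cd: "c < n" "d < n" "c \<noteq> d" "f = {c, d}" using f by (rule Kn_edgesE)
  have "\<exists>\<sigma>. \<sigma> permutes {..<n} \<and> map \<sigma> [a, b] = [c, d]"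
    using ab(1-3) cd(1-3) by (intro perm_exists) auto
  then obtain \<sigma> where s: "\<sigma> permutes {..<n}" "map \<sigma> [a, b] = [c, d]" by (elim exE conjE)
  have "\<sigma> a = c" "\<sigma> b = d" using s(2) by auto
  then have "\<sigma> ` e = f" using ab(4) cd(4) by simp
  moreover have "cnt2 n (\<sigma> ` e) (\<sigma> ` e) = cnt2 n e e" by (rule cnt2_perm[OF s(1) n])
  ultimately show ?thesis by simp
qed

lemma cnt1_val:
  assumes n: "n \<ge> 2" and e: "e \<in> Kn_edges n"
  shows "cnt2 n e e = 2 / real n * card (spanning_trees n)"
proof -
  have "(\<Sum>f\<in>Kn_edges n. cnt2 n f f) = (\<Sum>f\<in>Kn_edges n. cnt2 n e e)"
  proof (rule sum.cong)
    fix f assume "f \<in> Kn_edges n"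
    from cnt1_const[OF _ this e] n show "cnt2 n f f = cnt2 n e e" by simp
  qed simp
  then have "(\<Sum>f\<in>Kn_edges n. cnt2 n f f) = real (card (Kn_edges n)) * cnt2 n e e"
    by simp
  then have "real (n choose 2) * cnt2 n e e = real (n - 1) * card (spanning_trees n)"
    using sum_cnt1[of n] n by (simp add: card_Kn_edges)
  then have "real n * (real n - 1) / 2 * cnt2 n e e = (real n - 1) * card (spanning_trees n)"
    using n by (simp add: real_choose2 of_nat_diff)
  then have "(real n - 1) * (real n * cnt2 n e e - 2 * card (spanning_trees n)) = 0"
    by (simp add: field_simps)
  moreover have "real n - 1 \<noteq> 0" "real n > 0" using n by auto
  ultimately have "real n * cnt2 n e e = 2 * card (spanning_trees n)" by simp
  then show ?thesis using \<open>real n > 0\<close> by (simp add: field_simps)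
qed


lemma perm3:
  assumes "a < n" "b < n" "c < n" "distinct [a, b, c]" "n \<ge> 3"
  shows "cnt2 n {a, b} {a, c} = cnt2 n {0, 1} {0, 2}"
proof -
  have "\<exists>\<sigma>. \<sigma> permutes {..<n} \<and> map \<sigma> [a, b, c] = [0, 1, 2]"
    using assms by (intro perm_exists) auto
  then obtain \<sigma> where s: "\<sigma> permutes {..<n}" "map \<sigma> [a, b, c] = [0, 1, 2]" by (elim exE conjE)
  have "\<sigma> a = 0" "\<sigma> b = 1" "\<sigma> c = 2" using s(2) by auto
  then have "\<sigma> ` {a, b} = {0, 1}" "\<sigma> ` {a, c} = {0, 2}" by auto
  moreover have "cnt2 n (\<sigma> ` {a, b}) (\<sigma> ` {a, c}) = cnt2 n {a, b} {a, c}"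
    by (rule cnt2_perm[OF s(1)]) (use assms in simp)
  ultimately show ?thesis by simp
qed

lemma perm4:
  assumes "a < n" "b < n" "c < n" "d < n" "distinct [a, b, c, d]" "n \<ge> 4"
  shows "cnt2 n {a, b} {c, d} = cnt2 n {0, 1} {2, 3}"
proof -
  have "\<exists>\<sigma>. \<sigma> permutes {..<n} \<and> map \<sigma> [a, b, c, d] = [0, 1, 2, 3]"
    using assms by (intro perm_exists) auto
  then obtain \<sigma> where s: "\<sigma> permutes {..<n}" "map \<sigma> [a, b, c, d] = [0, 1, 2, 3]" by (elim exE conjE)
  have "\<sigma> a = 0" "\<sigma> b = 1" "\<sigma> c = 2" "\<sigma> d = 3" using s(2) by auto
  then have "\<sigma> ` {a, b} = {0, 1}" "\<sigma> ` {c, d} = {2, 3}" by auto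
  moreover have "cnt2 n (\<sigma> ` {a, b}) (\<sigma> ` {c, d}) = cnt2 n {a, b} {c, d}"
    by (rule cnt2_perm[OF s(1)]) (use assms in simp)
  ultimately show ?thesis by simp
qed

lemma deg_pairs:
  assumes T: "T \<subseteq> Kn_edges n" and b: "b < n"
  shows "real (deg b T * (deg b T - 1)) =
    (\<Sum>c\<in>{..<n} - {b}. \<Sum>c'\<in>{..<n} - {b} - {c}. of_bool ({b, c} \<in> T \<and> {b, c'} \<in> T))"
proof -
  define V where "V = {..<n} - {b}"
  define N where "N = Nb b T"
  have NV: "N \<subseteq> V" using Nb_sub[OF T] by (simp add: N_def V_def)
  have finV: "finite V" by (simp add: V_def)
  have "(\<Sum>c\<in>V. \<Sum>c'\<in>V - {c}. of_bool ({b, c} \<in> T \<and> {b, c'} \<in> T))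
      = (\<Sum>c\<in>V. of_bool (c \<in> N) * (\<Sum>c'\<in>V - {c}. (of_bool (c' \<in> N) :: real)))"
    by (simp add: sum_distrib_left N_def Nb_def of_bool_conj)
  also have "\<dots> = (\<Sum>c\<in>V. of_bool (c \<in> N) * real (deg b T - 1))"
  proof (rule sum.cong)
    fix c assume c: "c \<in> V"
    show "of_bool (c \<in> N) * (\<Sum>c'\<in>V - {c}. (of_bool (c' \<in> N) :: real)) =
        of_bool (c \<in> N) * real (deg b T - 1)"
    proof (cases "c \<in> N")
      case True
      have "(\<Sum>c'\<in>V - {c}. (of_bool (c' \<in> N) :: real)) = real (card ((V - {c}) \<inter> {c'. c' \<in> N}))"
        using sum_of_bool_eq[of "V - {c}" "\<lambda>c'. c' \<in> N"] finV by simp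
      also have "(V - {c}) \<inter> {c'. c' \<in> N} = N - {c}" using NV by auto
      also have "card (N - {c}) = deg b T - 1" using True by (simp add: N_def deg_def)
      finally show ?thesis by simp
    qed simp
  qed simp
  also have "\<dots> = real (card (V \<inter> {c. c \<in> N})) * real (deg b T - 1)"
    using sum_of_bool_eq[of V "\<lambda>c. c \<in> N"] finV by (simp add: sum_distrib_right[symmetric])
  also have "V \<inter> {c. c \<in> N} = N" using NV by auto
  finally show ?thesis by (simp add: V_def N_def deg_def)
qed

lemma qa_bound:
  assumes n: "n \<ge> 3"
  shows "real (n - 1) * real (n - 2) * cnt2 n {0, 1} {0, 2} \<le> 6 * card (spanning_trees n)"
proof -
  define V where "V = {..<n} - {0::nat}"
  have "(\<Sum>T\<in>spanning_trees n. real (deg 0 T * (deg 0 T - 1))) =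
      (\<Sum>T\<in>spanning_trees n. \<Sum>c\<in>V. \<Sum>c'\<in>V - {c}. of_bool ({0, c} \<in> T \<and> {0, c'} \<in> T))"
    using deg_pairs[of _ n 0] n by (intro sum.cong) (auto simp: V_def spanning_trees_def st_sub)
  also have "\<dots> = (\<Sum>c\<in>V. \<Sum>c'\<in>V - {c}. cnt2 n {0, c} {0, c'})"
    unfolding cnt2_def by (subst sum.swap) (simp add: sum.swap[of _ "spanning_trees n"])
  also have "\<dots> = (\<Sum>c\<in>V. \<Sum>c'\<in>V - {c}. cnt2 n {0, 1} {0, 2})"
  proof (intro sum.cong refl)
    fix c c' assume "c \<in> V" "c' \<in> V - {c}"
    then show "cnt2 n {0, c} {0, c'} = cnt2 n {0, 1} {0, 2}"
      using n by (intro perm3) (auto simp: V_def)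
  qed
  also have "\<dots> = real (n - 1) * real (n - 2) * cnt2 n {0, 1} {0, 2}"
  proof -
    have "card V = n - 1" using n by (simp add: V_def)
    moreover have "card (V - {c}) = n - 2" if "c \<in> V" for c
      using that n by (simp add: V_def)
    ultimately show ?thesis by simp
  qed
  finally have eq: "(\<Sum>T\<in>spanning_trees n. real (deg 0 T * (deg 0 T - 1))) =
      real (n - 1) * real (n - 2) * cnt2 n {0, 1} {0, 2}" .
  have "(\<Sum>T\<in>spanning_trees n. deg 0 T * (deg 0 T - 1)) \<le> 6 * card (spanning_trees n)"
    using switch_bound[of 0 n] n by simp
  then have "real (\<Sum>T\<in>spanning_trees n. deg 0 T * (deg 0 T - 1)) \<le> 6 * card (spanning_trees n)"
    by (metis of_nat_le_iff of_nat_mult of_nat_numeral)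
  then show ?thesis using eq by simp
qed


lemma adj_shape:
  assumes e: "e \<in> Kn_edges n" and f: "f \<in> Kn_edges n" and ne: "f \<noteq> e" and i: "f \<inter> e \<noteq> {}"
  shows "\<exists>u v w. u < n \<and> v < n \<and> w < n \<and> distinct [u, v, w] \<and> e = {u, v} \<and> f = {u, w}"
proof -
  obtain a b where ab: "a < n" "b < n" "a \<noteq> b" "e = {a, b}" using e by (rule Kn_edgesE)
  obtain c d where cd: "c < n" "d < n" "c \<noteq> d" "f = {c, d}" using f by (rule Kn_edgesE)
  have ne': "{c, d} \<noteq> {a, b}" using ne ab(4) cd(4) by simp
  have "{c, d} \<inter> {a, b} \<noteq> {}" using i ab(4) cd(4) by simp
  then have "c = a \<or> c = b \<or> d = a \<or> d = b" by blast
  then show ?thesis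
  proof (elim disjE)
    assume h: "c = a"
    then have "d \<noteq> b" using ne' by blast
    then have "distinct [a, b, d]" using h ab(3) cd(3) by simp
    then show ?thesis using ab cd h by blast
  next
    assume h: "c = b"
    then have "d \<noteq> a" using ne' by blast
    then have "distinct [b, a, d]" using h ab(3) cd(3) by simp
    moreover have "e = {b, a}" using ab(4) by blast
    ultimately show ?thesis using ab cd h by blast
  next
    assume h: "d = a"
    then have "c \<noteq> b" using ne' by blast
    then have "distinct [a, b, c]" using h ab(3) cd(3) by simp
    moreover have "f = {a, c}" using cd(4) h by blast
    ultimately show ?thesis using ab cd h by blast
  next
    assume h: "d = b"
    then have "c \<noteq> a" using ne' by blast
    then have "distinct [b, a, c]" using h ab(3) cd(3) by simp
    moreover have "f = {b, c}" using cd(4) h by blast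
    moreover have "e = {b, a}" using ab(4) by blast
    ultimately show ?thesis using ab cd h by blast
  qed
qed

lemma alpha_bound:
  assumes n: "n \<ge> 7"
  shows "(\<Sum>e\<in>Kn_edges n. \<Sum>f\<in>Kn_edges n. (cnt2 n e f / card (spanning_trees n))\<^sup>2)
    \<le> real (n choose 2) * ((2 / real n)\<^sup>2 + 2 * real n * (6 / ((real n - 1) * (real n - 2)))\<^sup>2
        + ((real n - 2) * (2 / real n))\<^sup>2 / (real (n choose 2) - 1 - 2 * real n))"
proof -
  define cS where "cS = real (card (spanning_trees n))"
  define K where "K = Kn_edges n"
  define p where "p = 2 / real n"
  define qA where "qA = cnt2 n {0, 1} {0, 2} / cS"
  define qD where "qD = cnt2 n {0, 1} {2, 3} / cS"
  define qa where "qa = 6 / ((real n - 1) * (real n - 2))"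
  define B where "B = real (n choose 2) - 1 - 2 * real n"
  define bound where "bound = p\<^sup>2 + 2 * real n * qa\<^sup>2 + ((real n - 2) * p)\<^sup>2 / B"
  have cS: "cS > 0" using trees_nonempty[of n] finite_trees[of n] n
    by (simp add: cS_def card_gt_0_iff)
  have finK: "finite K" by (simp add: K_def finite_Kn_edges)
  have cardK: "real (card K) = real (n choose 2)" by (simp add: K_def card_Kn_edges)
  have qA0: "qA \<ge> 0" using cS by (simp add: qA_def cnt2_def sum_nonneg)
  have qD0: "qD \<ge> 0" using cS by (simp add: qD_def cnt2_def sum_nonneg)
  have qAle: "qA \<le> qa"
  proof -
    have "real (n - 1) * real (n - 2) * cnt2 n {0, 1} {0, 2} \<le> 6 * cS"
      using qa_bound[of n] n by (simp add: cS_def)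
    moreover have "real (n - 1) = real n - 1" "real (n - 2) = real n - 2" using n by auto
    moreover have "(real n - 1) * (real n - 2) > 0" using n by simp
    ultimately show ?thesis using cS by (simp add: qA_def qa_def field_simps)
  qed
  have Bpos: "B \<ge> real n - 1"
  proof -
    have "real n * (real n - 1) / 2 \<ge> 3 * real n" using n by (simp add: field_simps)
    then show ?thesis by (simp add: B_def real_choose2)
  qed
  have Bpos': "B > 0" using Bpos n by simp
  have per: "(\<Sum>f\<in>K. (cnt2 n e f / cS)\<^sup>2) \<le> bound" if e: "e \<in> K" for e
  proof -
    have eK: "e \<in> Kn_edges n" using e by (simp add: K_def)
    obtain a b where ab: "a < n" "b < n" "a \<noteq> b" "e = {a, b}" using eK by (rule Kn_edgesE)
    define Adj where "Adj = {f\<in>K. f \<noteq> e \<and> f \<inter> e \<noteq> {}}"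
    define Dis where "Dis = {f\<in>K. f \<inter> e = {}}"
    have Kdec: "K = insert e (Adj \<union> Dis)" using e by (auto simp: Adj_def Dis_def)
    have disj: "Adj \<inter> Dis = {}" "e \<notin> Adj \<union> Dis" using ab by (auto simp: Adj_def Dis_def)
    have finA: "finite Adj" "finite Dis" using finK by (auto simp: Adj_def Dis_def)
    have qee: "cnt2 n e e / cS = p"
      using cnt1_val[of n e] n e cS by (simp add: K_def cS_def p_def)
    have qAdj: "cnt2 n e f / cS = qA" if "f \<in> Adj" for f
    proof -
      have "f \<in> Kn_edges n" "f \<noteq> e" "f \<inter> e \<noteq> {}" "e \<in> Kn_edges n"
        using that e by (auto simp: Adj_def K_def)
      from adj_shape[OF this(4,1,2,3)] obtain u v w where
        uvw: "u < n" "v < n" "w < n" "distinct [u, v, w]" "e = {u, v}" "f = {u, w}"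
        by blast
      then show ?thesis using perm3[of u n v w] n by (simp add: qA_def)
    qed
    have qDis: "cnt2 n e f / cS = qD" if "f \<in> Dis" for f
    proof -
      have "f \<in> Kn_edges n" using that by (simp add: Dis_def K_def)
      then obtain c d where cd: "c < n" "d < n" "c \<noteq> d" "f = {c, d}" by (rule Kn_edgesE)
      have "distinct [a, b, c, d]" using that ab cd by (auto simp: Dis_def)
      then show ?thesis using perm4[of a n b c d] ab cd n by (simp add: qD_def)
    qed
    have sumq: "(\<Sum>f\<in>K. g (cnt2 n e f / cS)) = g p + real (card Adj) * g qA + real (card Dis) * g qD"
      for g :: "real \<Rightarrow> real"
    proof -
      have "(\<Sum>f\<in>K. g (cnt2 n e f / cS)) = g (cnt2 n e e / cS) + (\<Sum>f\<in>Adj. g (cnt2 n e f / cS))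
          + (\<Sum>f\<in>Dis. g (cnt2 n e f / cS))"
        unfolding Kdec using disj finA by (simp add: sum.union_disjoint)
      also have "(\<Sum>f\<in>Adj. g (cnt2 n e f / cS)) = (\<Sum>f\<in>Adj. g qA)" using qAdj by simp
      also have "(\<Sum>f\<in>Dis. g (cnt2 n e f / cS)) = (\<Sum>f\<in>Dis. g qD)" using qDis by simp
      finally show ?thesis using qee by simp
    qed
    have row: "(\<Sum>f\<in>K. cnt2 n e f / cS) = (real n - 1) * p"
    proof -
      have "(\<Sum>f\<in>K. cnt2 n e f / cS) = (\<Sum>f\<in>K. cnt2 n e f) / cS" by (simp add: sum_divide_distrib)
      also have "\<dots> = real (n - 1) * (cnt2 n e e / cS)"
        using sum_cnt2_row[of n e] n by (simp add: K_def)
      finally show ?thesis using qee n by (simp add: of_nat_diff)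
    qed
    have lin: "p + real (card Adj) * qA + real (card Dis) * qD = (real n - 1) * p"
      using sumq[of "\<lambda>x. x"] row by simp
    have cAdj: "card Adj \<le> 2 * n"
    proof -
      have "Adj \<subseteq> (\<lambda>c. {a, c}) ` {..<n} \<union> (\<lambda>c. {b, c}) ` {..<n}"
      proof
        fix f assume f: "f \<in> Adj"
        have "f \<in> Kn_edges n" using f by (simp add: Adj_def K_def)
        then obtain c d where cd: "c < n" "d < n" "c \<noteq> d" "f = {c, d}" by (rule Kn_edgesE)
        have "c = a \<or> c = b \<or> d = a \<or> d = b" using f cd ab by (auto simp: Adj_def)
        then show "f \<in> (\<lambda>c. {a, c}) ` {..<n} \<union> (\<lambda>c. {b, c}) ` {..<n}"
          using cd by (auto simp: insert_commute)
      qed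
      then have "card Adj \<le> card ((\<lambda>c. {a, c}) ` {..<n} \<union> (\<lambda>c. {b, c}) ` {..<n})"
        by (intro card_mono) auto
      also have "\<dots> \<le> card ((\<lambda>c. {a, c}) ` {..<n}) + card ((\<lambda>c. {b, c}) ` {..<n})"
        by (rule card_Un_le)
      also have "\<dots> \<le> n + n"
      proof (intro add_mono)
        show "card ((\<lambda>c. {a, c}) ` {..<n}) \<le> n" using card_image_le[of "{..<n}" "\<lambda>c. {a, c}"] by simp
        show "card ((\<lambda>c. {b, c}) ` {..<n}) \<le> n" using card_image_le[of "{..<n}" "\<lambda>c. {b, c}"] by simp
      qed
      finally show ?thesis by simp
    qed
    have cK: "card K = 1 + card Adj + card Dis"
      unfolding Kdec using disj finA by (simp add: card_Un_disjoint)
    have cDis: "real (card Dis) \<ge> B"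
    proof -
      have "real (card K) = 1 + real (card Adj) + real (card Dis)" using cK by simp
      moreover have "real (card Adj) \<le> 2 * real n" using cAdj by (metis of_nat_le_iff of_nat_mult of_nat_numeral)
      ultimately show ?thesis using cardK unfolding B_def by linarith
    qed
    have cDq: "real (card Dis) * qD \<le> (real n - 2) * p"
    proof -
      have "real (card Adj) * qA \<ge> 0" using qA0 by simp
      then show ?thesis using lin by (simp add: algebra_simps)
    qed
    have cDpos: "real (card Dis) > 0" using cDis Bpos' by simp
    have qDle: "qD \<le> (real n - 2) * p / B"
    proof -
      have "qD \<le> (real n - 2) * p / real (card Dis)" using cDq cDpos by (simp add: field_simps)
      also have "\<dots> \<le> (real n - 2) * p / B"
        using cDis Bpos' n by (intro divide_left_mono) (auto simp: p_def)
      finally show ?thesis .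
    qed
    have t2: "real (card Dis) * qD\<^sup>2 \<le> ((real n - 2) * p)\<^sup>2 / B"
    proof -
      have "real (card Dis) * qD\<^sup>2 = (real (card Dis) * qD) * qD" by (simp add: power2_eq_square)
      also have "\<dots> \<le> ((real n - 2) * p) * ((real n - 2) * p / B)"
      proof (rule mult_mono[OF cDq qDle])
        show "0 \<le> (real n - 2) * p" using n by (simp add: p_def)
      qed (rule qD0)
      finally show ?thesis by (simp add: power2_eq_square)
    qed
    have t1: "real (card Adj) * qA\<^sup>2 \<le> 2 * real n * qa\<^sup>2"
    proof -
      have "qA\<^sup>2 \<le> qa\<^sup>2" using qA0 qAle by (intro power_mono) auto
      moreover have "real (card Adj) \<le> 2 * real n" using cAdj by linarith
      ultimately show ?thesis by (intro mult_mono) auto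
    qed
    have "(\<Sum>f\<in>K. (cnt2 n e f / cS)\<^sup>2) = p\<^sup>2 + real (card Adj) * qA\<^sup>2 + real (card Dis) * qD\<^sup>2"
      using sumq[of "\<lambda>x. x\<^sup>2"] by simp
    then show ?thesis using t1 t2 unfolding bound_def by linarith
  qed
  have "(\<Sum>e\<in>K. \<Sum>f\<in>K. (cnt2 n e f / cS)\<^sup>2) \<le> (\<Sum>e\<in>K. bound)"
    using per by (intro sum_mono) auto
  also have "\<dots> = real (n choose 2) * bound" using cardK by simp
  finally show ?thesis unfolding K_def cS_def bound_def p_def qa_def B_def .
qed

definition Om :: "nat \<Rightarrow> nat \<Rightarrow> (nat \<Rightarrow> nat set set) set" where
  "Om k n = PiE {..<k} (\<lambda>_. spanning_trees n)"

lemma finite_Om: "finite (Om k n)"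
  by (simp add: Om_def finite_PiE finite_trees)

lemma Om_nonempty: "n \<ge> 1 \<Longrightarrow> Om k n \<noteq> {}"
  using trees_nonempty by (simp add: Om_def PiE_eq_empty_iff)

lemma resample:
  assumes l: "l < k"
  shows "(\<Sum>om\<in>Om k n. \<Sum>T\<in>spanning_trees n. (g (om(l := T)) :: real))
       = real (card (spanning_trees n)) * (\<Sum>om\<in>Om k n. g om)"
proof -
  define S where "S = spanning_trees n"
  define h where "h = (\<lambda>(om::nat \<Rightarrow> nat set set, T::nat set set). (om(l := T), om l))"
  have hh: "h (h x) = x" for x by (cases x) (simp add: h_def)
  have hin: "h x \<in> Om k n \<times> S" if "x \<in> Om k n \<times> S" for x
    using that l by (cases x) (auto simp: h_def Om_def S_def PiE_iff extensional_def)
  have bij: "bij_betw h (Om k n \<times> S) (Om k n \<times> S)"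
  proof (rule bij_betw_byWitness[where f'=h])
    show "\<forall>a\<in>Om k n \<times> S. h (h a) = a" using hh by blast
    show "\<forall>a\<in>Om k n \<times> S. h (h a) = a" using hh by blast
    show "h ` (Om k n \<times> S) \<subseteq> Om k n \<times> S" using hin by blast
    show "h ` (Om k n \<times> S) \<subseteq> Om k n \<times> S" using hin by blast
  qed
  have "(\<Sum>om\<in>Om k n. \<Sum>T\<in>S. g (om(l := T))) = (\<Sum>x\<in>Om k n \<times> S. g (fst (h x)))"
    by (simp add: sum.cartesian_product h_def split_def)
  also have "\<dots> = (\<Sum>x\<in>Om k n \<times> S. g (fst x))"
    using sum.reindex_bij_betw[OF bij, of "\<lambda>x. g (fst x)"] by simp
  also have "\<dots> = (\<Sum>om\<in>Om k n. \<Sum>T\<in>S. g om)"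
    using sum.cartesian_product[of "\<lambda>om T. g om" S "Om k n"] by (simp add: split_def)
  also have "\<dots> = real (card S) * (\<Sum>om\<in>Om k n. g om)"
    by (simp add: sum_distrib_left mult.commute)
  finally show ?thesis by (simp add: S_def)
qed

lemma prod_indep:
  assumes J: "J \<subseteq> {..<k}" and n: "n \<ge> 1"
  shows "(\<Sum>om\<in>Om k n. \<Prod>i\<in>J. (h i (om i) :: real))
       = real (card (Om k n)) * (\<Prod>i\<in>J. (\<Sum>T\<in>spanning_trees n. h i T) / card (spanning_trees n))"
proof -
  have finJ: "finite J" using J finite_subset by blast
  show ?thesis using finJ J
  proof (induction J rule: finite_induct)
    case empty then show ?case by simp
  next
    case (insert l J)
    define cS where "cS = real (card (spanning_trees n))"
    have cS: "cS > 0" using trees_nonempty[OF n] finite_trees by (simp add: cS_def card_gt_0_iff)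
    have l: "l < k" using insert by auto
    define G where "G om = (\<Prod>i\<in>J. h i (om i))" for om
    have GT: "G (om(l := T)) = G om" for om T
      unfolding G_def using insert(2) by (intro prod.cong) auto
    have "(\<Sum>om\<in>Om k n. \<Prod>i\<in>insert l J. h i (om i)) = (\<Sum>om\<in>Om k n. h l (om l) * G om)"
      using insert by (simp add: G_def)
    also have "\<dots> = (\<Sum>om\<in>Om k n. \<Sum>T\<in>spanning_trees n. h l ((om(l := T)) l) * G (om(l := T))) / cS"
      using resample[OF l, where n=n and g="\<lambda>om. h l (om l) * G om"] cS by (simp add: cS_def)
    also have "\<dots> = (\<Sum>om\<in>Om k n. (\<Sum>T\<in>spanning_trees n. h l T) * G om) / cS"
      by (simp add: GT sum_distrib_right)
    also have "\<dots> = ((\<Sum>T\<in>spanning_trees n. h l T) / cS) * (\<Sum>om\<in>Om k n. G om)"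
      by (simp add: sum_distrib_left[symmetric])
    also have "(\<Sum>om\<in>Om k n. G om) = real (card (Om k n)) * (\<Prod>i\<in>J. (\<Sum>T\<in>spanning_trees n. h i T) / card (spanning_trees n))"
      using insert by (simp add: G_def)
    finally show ?case using insert by (simp add: cS_def)
  qed
qed


definition mc :: "nat \<Rightarrow> nat set \<Rightarrow> (nat \<Rightarrow> nat set set) \<Rightarrow> nat" where
  "mc k e Ts = card {i\<in>{..<k}. e \<in> Ts i}"

definition Pk :: "nat \<Rightarrow> nat \<Rightarrow> nat set set" where
  "Pk k r = {J. J \<subseteq> {..<k} \<and> card J = r}"

definition pI :: "nat set \<Rightarrow> nat set \<Rightarrow> (nat \<Rightarrow> nat set set) \<Rightarrow> real" where
  "pI e J Ts = (\<Prod>i\<in>J. of_bool (e \<in> Ts i))"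

lemma finite_Pk: "finite (Pk k r)"
  by (rule finite_subset[of _ "Pow {..<k}"]) (auto simp: Pk_def)

lemma card_Pk: "card (Pk k r) = k choose r"
  using n_subsets[of "{..<k}" r] by (simp add: Pk_def)

lemma prod_of_bool: "finite J \<Longrightarrow> (\<Prod>i\<in>J. (of_bool (P i) :: real)) = of_bool (\<forall>i\<in>J. P i)"
  by (induction J rule: finite_induct) auto

lemma choose_sum: "real (mc k e Ts choose r) = (\<Sum>J\<in>Pk k r. pI e J Ts)"
proof -
  define I where "I = {i\<in>{..<k}. e \<in> Ts i}"
  have "(\<Sum>J\<in>Pk k r. pI e J Ts) = (\<Sum>J\<in>Pk k r. of_bool (J \<subseteq> I))"
  proof (rule sum.cong)
    fix J assume J: "J \<in> Pk k r"
    then have fJ: "finite J" "J \<subseteq> {..<k}" by (auto simp: Pk_def intro: finite_subset)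
    show "pI e J Ts = of_bool (J \<subseteq> I)"
      unfolding pI_def prod_of_bool[OF fJ(1)] using fJ(2) by (auto simp: I_def)
  qed simp
  also have "\<dots> = real (card (Pk k r \<inter> {J. J \<subseteq> I}))"
    using sum_of_bool_eq[of "Pk k r" "\<lambda>J. J \<subseteq> I"] finite_Pk by simp
  also have "Pk k r \<inter> {J. J \<subseteq> I} = {J. J \<subseteq> I \<and> card J = r}"
    by (auto simp: Pk_def I_def)
  also have "card {J. J \<subseteq> I \<and> card J = r} = card I choose r"
    by (rule n_subsets) (simp add: I_def)
  finally show ?thesis by (simp add: mc_def I_def)
qed

lemma R_formula:
  assumes k: "k \<ge> 1"
  shows "R_edge k Ts e = real (mc k e Ts) - of_bool (mc k e Ts > 0)"
proof -
  define I where "I = {i\<in>{..<k}. e \<in> Ts i}"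
  have s: "(\<Sum>i<k. (of_bool (e \<in> Ts i) :: real)) = real (mc k e Ts)"
    using sum_of_bool_eq[of "{..<k}" "\<lambda>i. e \<in> Ts i"] by (simp add: mc_def Int_def)
  have m: "mc k e Ts > 0 \<longleftrightarrow> (\<exists>i<k. e \<in> Ts i)"
    by (auto simp: mc_def card_gt_0_iff)
  have "Max ((\<lambda>i. (of_bool (e \<in> Ts i) :: real)) ` {..<k}) = of_bool (mc k e Ts > 0)"
  proof (cases "\<exists>i<k. e \<in> Ts i")
    case True
    then obtain i where i: "i < k" "e \<in> Ts i" by blast
    show ?thesis
    proof (rule Max_eqI)
      show "finite ((\<lambda>i. (of_bool (e \<in> Ts i) :: real)) ` {..<k})" by simp
      show "y \<le> of_bool (mc k e Ts > 0)" if "y \<in> (\<lambda>i. (of_bool (e \<in> Ts i) :: real)) ` {..<k}" for y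
        using that True m by auto
      show "of_bool (mc k e Ts > 0) \<in> (\<lambda>i. (of_bool (e \<in> Ts i) :: real)) ` {..<k}"
        using True m i by (auto intro!: image_eqI[of _ _ i])
    qed
  next
    case False
    then have "(\<lambda>i. (of_bool (e \<in> Ts i) :: real)) ` {..<k} = {0}" using k by (auto intro!: image_eqI[of _ _ 0])
    then show ?thesis using False m by simp
  qed
  then show ?thesis unfolding R_edge_def s by simp
qed

lemma real_choose3: "real (m choose 3) = real m * (real m - 1) * (real m - 2) / 6"
proof (induction m)
  case 0 then show ?case by simp
next
  case (Suc m)
  have "Suc m choose 3 = (m choose 2) + (m choose 3)"
    by (metis binomial_Suc_Suc numeral_2_eq_2 numeral_3_eq_3)
  then show ?case using Suc by (simp add: real_choose2 field_simps)
qed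

lemma R_ineqs:
  fixes m :: nat
  defines "R \<equiv> real m - of_bool (m > 0)"
  shows "0 \<le> R" "R \<le> real (m choose 2)" "real (m choose 2) - R \<le> real (m choose 3)"
proof -
  show "0 \<le> R" by (cases m) (auto simp: R_def)
  show "R \<le> real (m choose 2)"
  proof (cases "m = 0")
    case False
    then have "R = real m - 1" by (simp add: R_def)
    moreover have "(real m - 1) * (real m - 2) \<ge> 0 \<or> m = 1"
      using False by (cases "m = 1") (auto intro: mult_nonneg_nonneg)
    ultimately show ?thesis by (auto simp: real_choose2 field_simps)
  qed (simp add: R_def)
  show "real (m choose 2) - R \<le> real (m choose 3)"
  proof (cases "m \<ge> 3")
    case True
    then have "R = real m - 1" by (simp add: R_def)
    moreover have "(real m - 1) * (real m - 2) * (real m - 3) \<ge> 0" using True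
      by (intro mult_nonneg_nonneg) auto
    ultimately show ?thesis by (simp add: real_choose2 real_choose3 field_simps)
  next
    case False
    then have "m = 0 \<or> m = 1 \<or> m = 2" by auto
    then show ?thesis by (auto simp: R_def real_choose2 real_choose3)
  qed
qed


definition Zs :: "nat \<Rightarrow> nat set \<Rightarrow> (nat \<Rightarrow> nat set set) \<Rightarrow> real" where
  "Zs n J Ts = (\<Sum>e\<in>Kn_edges n. pI e J Ts)"

lemma cS_pos: "n \<ge> 1 \<Longrightarrow> real (card (spanning_trees n)) > 0"
  using trees_nonempty finite_trees by (simp add: card_gt_0_iff)

lemma sum_pI:
  assumes n: "n \<ge> 2" and J: "J \<subseteq> {..<k}" and e: "e \<in> Kn_edges n"
  shows "(\<Sum>om\<in>Om k n. pI e J om) = real (card (Om k n)) * (2 / real n) ^ card J"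
proof -
  have "(\<Sum>om\<in>Om k n. pI e J om) = real (card (Om k n)) *
      (\<Prod>i\<in>J. (\<Sum>T\<in>spanning_trees n. of_bool (e \<in> T)) / card (spanning_trees n))"
    unfolding pI_def by (rule prod_indep) (use J n in auto)
  also have "(\<Sum>T\<in>spanning_trees n. (of_bool (e \<in> T) :: real)) = cnt2 n e e"
    by (simp add: cnt2_def)
  also have "cnt2 n e e / card (spanning_trees n) = 2 / real n"
    using cnt1_val[OF n e] cS_pos[of n] n by simp
  finally show ?thesis by simp
qed

lemma sum_Zs:
  assumes n: "n \<ge> 2" and J: "J \<subseteq> {..<k}"
  shows "(\<Sum>om\<in>Om k n. Zs n J om) = real (card (Om k n)) * real (n choose 2) * (2 / real n) ^ card J"
proof -
  have "(\<Sum>om\<in>Om k n. Zs n J om) = (\<Sum>e\<in>Kn_edges n. \<Sum>om\<in>Om k n. pI e J om)"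
    unfolding Zs_def by (rule sum.swap)
  also have "\<dots> = (\<Sum>e\<in>Kn_edges n. real (card (Om k n)) * (2 / real n) ^ card J)"
    using sum_pI[OF n J] by simp
  finally show ?thesis by (simp add: card_Kn_edges)
qed

lemma sum_Zs_sq:
  assumes n: "n \<ge> 2" and J: "J \<in> Pk k 2"
  shows "(\<Sum>om\<in>Om k n. Zs n J om * Zs n J om) = real (card (Om k n)) *
     (\<Sum>e\<in>Kn_edges n. \<Sum>f\<in>Kn_edges n. (cnt2 n e f / card (spanning_trees n))\<^sup>2)"
proof -
  have J': "J \<subseteq> {..<k}" "card J = 2" using J by (auto simp: Pk_def)
  have fJ: "finite J" using J'(1) finite_subset by blast
  have "(\<Sum>om\<in>Om k n. Zs n J om * Zs n J om) =
      (\<Sum>om\<in>Om k n. \<Sum>e\<in>Kn_edges n. \<Sum>f\<in>Kn_edges n. \<Prod>i\<in>J. (of_bool (e \<in> om i \<and> f \<in> om i) :: real))"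
    unfolding Zs_def pI_def sum_product by (simp add: prod.distrib[symmetric] of_bool_conj)
  also have "\<dots> = (\<Sum>e\<in>Kn_edges n. \<Sum>f\<in>Kn_edges n. \<Sum>om\<in>Om k n. \<Prod>i\<in>J. (of_bool (e \<in> om i \<and> f \<in> om i) :: real))"
    by (simp add: sum.swap[of _ "Om k n"])
  also have "\<dots> = (\<Sum>e\<in>Kn_edges n. \<Sum>f\<in>Kn_edges n. real (card (Om k n)) * (cnt2 n e f / card (spanning_trees n))\<^sup>2)"
  proof (intro sum.cong refl)
    fix e f
    have "(\<Sum>om\<in>Om k n. \<Prod>i\<in>J. (of_bool (e \<in> om i \<and> f \<in> om i) :: real)) = real (card (Om k n)) *
      (\<Prod>i\<in>J. (\<Sum>T\<in>spanning_trees n. of_bool (e \<in> T \<and> f \<in> T)) / card (spanning_trees n))"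
      by (rule prod_indep) (use J' n in auto)
    also have "\<dots> = real (card (Om k n)) * (cnt2 n e f / card (spanning_trees n))\<^sup>2"
      using J'(2) by (simp add: cnt2_def)
    finally show "(\<Sum>om\<in>Om k n. \<Prod>i\<in>J. (of_bool (e \<in> om i \<and> f \<in> om i) :: real)) =
        real (card (Om k n)) * (cnt2 n e f / card (spanning_trees n))\<^sup>2" .
  qed
  finally show ?thesis by (simp add: sum_distrib_left)
qed


lemma choose2_p: "n \<ge> 1 \<Longrightarrow> real (n choose 2) * (2 / real n) = real n - 1"
  by (simp add: real_choose2 field_simps)

lemma sum_Zs_diff:
  assumes n: "n \<ge> 2" and J: "J \<in> Pk k 2" and J': "J' \<in> Pk k 2" and ne: "J \<noteq> J'"
  shows "(\<Sum>om\<in>Om k n. Zs n J om * Zs n J' om) = real (card (Om k n)) *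
     (real (n choose 2) * (2 / real n)\<^sup>2)\<^sup>2"
proof -
  define cS where "cS = real (card (spanning_trees n))"
  have cS: "cS > 0" using cS_pos[of n] n by (simp add: cS_def)
  have Jp: "J \<subseteq> {..<k}" "card J = 2" and J'p: "J' \<subseteq> {..<k}" "card J' = 2"
    using J J' by (auto simp: Pk_def)
  have fJ: "finite J" using Jp(1) finite_subset by blast
  have "\<not> J' \<subseteq> J"
  proof
    assume "J' \<subseteq> J"
    then have "J' = J" using card_subset_eq[OF fJ] Jp(2) J'p(2) by simp
    then show False using ne by simp
  qed
  then obtain l where l: "l \<in> J'" "l \<notin> J" by blast
  obtain a b where ab: "a \<noteq> b" "J' = {a, b}" using J'p(2) by (auto simp: card_2_iff)
  obtain l' where l': "J' = {l, l'}" "l \<noteq> l'" using ab l(1) by (auto simp: insert_commute)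
  have lk: "l < k" using l(1) J'p(1) by auto
  have ZJ: "Zs n J (om(l := T)) = Zs n J om" for om T
    unfolding Zs_def pI_def using l(2) by (intro sum.cong prod.cong) auto
  have ZJ': "Zs n J' (om(l := T)) = (\<Sum>e\<in>Kn_edges n. of_bool (e \<in> T) * of_bool (e \<in> om l'))" for om T
    unfolding Zs_def pI_def l'(1) using l'(2) by simp
  have inner: "(\<Sum>T\<in>spanning_trees n. Zs n J' (om(l := T))) = 2 / real n * cS * (real n - 1)"
    if om: "om \<in> Om k n" for om
  proof -
    have l'k: "l' < k" using l'(1) J'p(1) by auto
    then have Tl': "om l' \<in> spanning_trees n" using om by (auto simp: Om_def PiE_iff)
    have "(\<Sum>T\<in>spanning_trees n. Zs n J' (om(l := T))) =
        (\<Sum>e\<in>Kn_edges n. (\<Sum>T\<in>spanning_trees n. of_bool (e \<in> T)) * of_bool (e \<in> om l'))"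
      unfolding ZJ' by (subst sum.swap) (simp add: sum_distrib_right)
    also have "\<dots> = (\<Sum>e\<in>Kn_edges n. 2 / real n * cS * of_bool (e \<in> om l'))"
    proof (intro sum.cong refl)
      fix e assume e: "e \<in> Kn_edges n"
      have "(\<Sum>T\<in>spanning_trees n. (of_bool (e \<in> T) :: real)) = cnt2 n e e" by (simp add: cnt2_def)
      also have "\<dots> = 2 / real n * cS" using cnt1_val[OF n e] by (simp add: cS_def)
      finally show "(\<Sum>T\<in>spanning_trees n. of_bool (e \<in> T)) * of_bool (e \<in> om l') =
          2 / real n * cS * of_bool (e \<in> om l')" by simp
    qed
    also have "\<dots> = 2 / real n * cS * (\<Sum>e\<in>Kn_edges n. of_bool (e \<in> om l'))"
      by (simp add: sum_distrib_left)
    also have "(\<Sum>e\<in>Kn_edges n. (of_bool (e \<in> om l') :: real)) = real (card (om l'))"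
      using sum_mem_card[of "om l'" n] Tl' by (simp add: spanning_trees_def st_sub)
    also have "card (om l') = n - 1" using tree_card[of n "om l'"] Tl' n by simp
    also have "real (n - 1) = real n - 1" using n by (simp add: of_nat_diff)
    finally show ?thesis .
  qed
  have "(\<Sum>om\<in>Om k n. Zs n J om * Zs n J' om) =
      (\<Sum>om\<in>Om k n. \<Sum>T\<in>spanning_trees n. Zs n J (om(l := T)) * Zs n J' (om(l := T))) / cS"
    using resample[OF lk, where n=n and g="\<lambda>om. Zs n J om * Zs n J' om"] cS by (simp add: cS_def)
  also have "\<dots> = (\<Sum>om\<in>Om k n. Zs n J om * (\<Sum>T\<in>spanning_trees n. Zs n J' (om(l := T)))) / cS"
    by (simp add: ZJ sum_distrib_left)
  also have "\<dots> = (\<Sum>om\<in>Om k n. Zs n J om * (2 / real n * cS * (real n - 1))) / cS"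
    using inner by simp
  also have "\<dots> = (\<Sum>om\<in>Om k n. Zs n J om) * (2 / real n * cS * (real n - 1)) / cS"
    by (simp only: sum_distrib_right[symmetric])
  also have "\<dots> = 2 / real n * (real n - 1) * (\<Sum>om\<in>Om k n. Zs n J om)"
  proof -
    have "cS \<noteq> 0" using cS by simp
    then show ?thesis by (simp add: ac_simps)
  qed
  also have "\<dots> = 2 / real n * (real n - 1) * (real (card (Om k n)) * real (n choose 2) * (2 / real n)\<^sup>2)"
    using sum_Zs[OF n Jp(1)] Jp(2) by simp
  also have "\<dots> = real (card (Om k n)) * (real (n choose 2) * (2 / real n)\<^sup>2)\<^sup>2"
  proof -
    have "real n - 1 = real (n choose 2) * (2 / real n)" using choose2_p[of n] n by simp
    then show ?thesis by (simp add: power2_eq_square ac_simps)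
  qed
  finally show ?thesis .
qed


definition Nn :: "nat \<Rightarrow> nat \<Rightarrow> nat \<Rightarrow> (nat \<Rightarrow> nat set set) \<Rightarrow> real" where
  "Nn r k n Ts = (\<Sum>e\<in>Kn_edges n. real (mc k e Ts choose r))"

lemma Nn_Zs: "Nn r k n Ts = (\<Sum>J\<in>Pk k r. Zs n J Ts)"
  unfolding Nn_def Zs_def choose_sum by (rule sum.swap)

lemma sum_Nn:
  assumes n: "n \<ge> 2"
  shows "(\<Sum>om\<in>Om k n. Nn r k n om) = real (card (Om k n)) * real (k choose r) * real (n choose 2) * (2 / real n) ^ r"
proof -
  have "(\<Sum>om\<in>Om k n. Nn r k n om) = (\<Sum>J\<in>Pk k r. \<Sum>om\<in>Om k n. Zs n J om)"
    unfolding Nn_Zs by (rule sum.swap)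
  also have "\<dots> = (\<Sum>J\<in>Pk k r. real (card (Om k n)) * real (n choose 2) * (2 / real n) ^ r)"
    using sum_Zs[OF n] by (intro sum.cong) (auto simp: Pk_def)
  finally show ?thesis by (simp add: card_Pk)
qed

lemma sum_Nn_sq:
  assumes n: "n \<ge> 2"
  defines "\<alpha> \<equiv> (\<Sum>e\<in>Kn_edges n. \<Sum>f\<in>Kn_edges n. (cnt2 n e f / card (spanning_trees n))\<^sup>2)"
    and "\<gamma> \<equiv> real (n choose 2) * (2 / real n)\<^sup>2"
  shows "(\<Sum>om\<in>Om k n. (Nn 2 k n om)\<^sup>2) = real (card (Om k n)) *
    (real (k choose 2) * \<alpha> + (real (k choose 2) * real (k choose 2) - real (k choose 2)) * \<gamma>\<^sup>2)"
proof -
  define P where "P = Pk k 2"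
  have finP: "finite P" by (simp add: P_def finite_Pk)
  have "(\<Sum>om\<in>Om k n. (Nn 2 k n om)\<^sup>2) = (\<Sum>om\<in>Om k n. \<Sum>J\<in>P. \<Sum>J'\<in>P. Zs n J om * Zs n J' om)"
    unfolding Nn_Zs power2_eq_square P_def sum_product by simp
  also have "\<dots> = (\<Sum>J\<in>P. \<Sum>J'\<in>P. \<Sum>om\<in>Om k n. Zs n J om * Zs n J' om)"
    by (simp add: sum.swap[of _ "Om k n"])
  also have "\<dots> = (\<Sum>J\<in>P. real (card (Om k n)) * \<alpha> + real (card P - 1) * (real (card (Om k n)) * \<gamma>\<^sup>2))"
  proof (rule sum.cong[OF refl])
    fix J assume J: "J \<in> P"
    have "(\<Sum>J'\<in>P. \<Sum>om\<in>Om k n. Zs n J om * Zs n J' om) =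
        (\<Sum>om\<in>Om k n. Zs n J om * Zs n J om) + (\<Sum>J'\<in>P - {J}. \<Sum>om\<in>Om k n. Zs n J om * Zs n J' om)"
      using J finP by (simp add: sum.remove)
    also have "(\<Sum>om\<in>Om k n. Zs n J om * Zs n J om) = real (card (Om k n)) * \<alpha>"
      using sum_Zs_sq[OF n, of J k] J by (simp add: P_def \<alpha>_def)
    also have "(\<Sum>J'\<in>P - {J}. \<Sum>om\<in>Om k n. Zs n J om * Zs n J' om) =
        (\<Sum>J'\<in>P - {J}. real (card (Om k n)) * \<gamma>\<^sup>2)"
      using sum_Zs_diff[OF n, of J k] J by (intro sum.cong) (auto simp: P_def \<gamma>_def)
    also have "\<dots> = real (card P - 1) * (real (card (Om k n)) * \<gamma>\<^sup>2)"
      using J finP by simp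
    finally show "(\<Sum>J'\<in>P. \<Sum>om\<in>Om k n. Zs n J om * Zs n J' om) =
        real (card (Om k n)) * \<alpha> + real (card P - 1) * (real (card (Om k n)) * \<gamma>\<^sup>2)" .
  qed
  also have "\<dots> = real (card P) * (real (card (Om k n)) * \<alpha> + real (card P - 1) * (real (card (Om k n)) * \<gamma>\<^sup>2))"
    by simp
  also have "\<dots> = real (card (Om k n)) *
    (real (k choose 2) * \<alpha> + (real (k choose 2) * real (k choose 2) - real (k choose 2)) * \<gamma>\<^sup>2)"
  proof (cases "card P = 0")
    case True
    then have "real (k choose 2) = 0" by (simp add: P_def card_Pk del: binomial_eq_0_iff)
    then show ?thesis using True by (simp del: binomial_eq_0_iff of_nat_eq_0_iff)
  next
    case False
    then have "real (card P - 1) = real (card P) - 1" by (simp add: of_nat_diff)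
    then show ?thesis by (simp add: P_def card_Pk algebra_simps)
  qed
  finally show ?thesis .
qed

lemma M_bounds:
  assumes k: "k \<ge> 1"
  shows "0 \<le> M_rep k n Ts" "M_rep k n Ts \<le> Nn 2 k n Ts" "Nn 2 k n Ts - M_rep k n Ts \<le> Nn 3 k n Ts"
proof -
  have R: "R_edge k Ts e = real (mc k e Ts) - of_bool (mc k e Ts > 0)" for e
    using R_formula[OF k] .
  show "0 \<le> M_rep k n Ts" unfolding M_rep_def R using R_ineqs(1) by (intro sum_nonneg) auto
  show "M_rep k n Ts \<le> Nn 2 k n Ts" unfolding M_rep_def Nn_def R using R_ineqs(2) by (intro sum_mono) auto
  have "Nn 2 k n Ts - M_rep k n Ts = (\<Sum>e\<in>Kn_edges n. real (mc k e Ts choose 2) - R_edge k Ts e)"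
    unfolding M_rep_def Nn_def by (simp add: sum_subtractf)
  also have "\<dots> \<le> Nn 3 k n Ts" unfolding Nn_def R using R_ineqs(3) by (intro sum_mono) auto
  finally show "Nn 2 k n Ts - M_rep k n Ts \<le> Nn 3 k n Ts" .
qed

lemma cheb_sum:
  fixes f :: "'a \<Rightarrow> real"
  assumes fin: "finite A" and t: "t > 0"
  shows "real (card {x\<in>A. t \<le> \<bar>f x - mu\<bar>}) * t\<^sup>2 \<le> (\<Sum>x\<in>A. (f x - mu)\<^sup>2)"
proof -
  define B where "B = {x\<in>A. t \<le> \<bar>f x - mu\<bar>}"
  have "real (card B) * t\<^sup>2 = (\<Sum>x\<in>B. t\<^sup>2)" by simp
  also have "\<dots> \<le> (\<Sum>x\<in>B. (f x - mu)\<^sup>2)"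
  proof (intro sum_mono)
    fix x assume "x \<in> B"
    then have "t \<le> \<bar>f x - mu\<bar>" by (simp add: B_def)
    then have "t\<^sup>2 \<le> \<bar>f x - mu\<bar>\<^sup>2" using t by (intro power_mono) auto
    then show "t\<^sup>2 \<le> (f x - mu)\<^sup>2" by simp
  qed
  also have "\<dots> \<le> (\<Sum>x\<in>A. (f x - mu)\<^sup>2)"
    using fin by (intro sum_mono2) (auto simp: B_def)
  finally show ?thesis by (simp add: B_def)
qed

lemma var_sum:
  fixes f :: "'a \<Rightarrow> real"
  assumes fin: "finite A" and ne: "A \<noteq> {}"
  defines "mu \<equiv> (\<Sum>x\<in>A. f x) / card A"
  shows "(\<Sum>x\<in>A. (f x - mu)\<^sup>2) = (\<Sum>x\<in>A. (f x)\<^sup>2) - real (card A) * mu\<^sup>2"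
proof -
  have c: "real (card A) > 0" using fin ne by (simp add: card_gt_0_iff)
  have "(\<Sum>x\<in>A. (f x - mu)\<^sup>2) = (\<Sum>x\<in>A. (f x)\<^sup>2 - 2 * mu * f x + mu\<^sup>2)"
    by (simp add: power2_eq_square algebra_simps)
  also have "\<dots> = (\<Sum>x\<in>A. (f x)\<^sup>2) - 2 * mu * (\<Sum>x\<in>A. f x) + real (card A) * mu\<^sup>2"
    by (simp add: sum.distrib sum_subtractf sum_distrib_left)
  also have "(\<Sum>x\<in>A. f x) = real (card A) * mu" using c by (simp add: mu_def)
  finally show ?thesis by (simp add: power2_eq_square algebra_simps)
qed


lemma per_n:
  assumes k: "k \<ge> 2" and n: "n \<ge> 7" and s: "s > 0"
  defines "\<gamma> \<equiv> real (n choose 2) * (2 / real n)\<^sup>2"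
    and "\<epsilon> \<equiv> real (k choose 3) * real (n choose 2) * (2 / real n) ^ 3"
    and "a \<equiv> real (n choose 2) * ((2 / real n)\<^sup>2 + 2 * real n * (6 / ((real n - 1) * (real n - 2)))\<^sup>2
        + ((real n - 2) * (2 / real n))\<^sup>2 / (real (n choose 2) - 1 - 2 * real n))"
  defines "X \<equiv> real (k choose 2) * a + (real (k choose 2) * real (k choose 2) - real (k choose 2)) * \<gamma>\<^sup>2"
    and "L \<equiv> real (k choose 2) * \<gamma> - \<epsilon>"
  assumes L: "L > 0"
  shows "measure_pmf.prob (tree_tuples k n)
            {Ts. \<bar>M_rep k n Ts - measure_pmf.expectation (tree_tuples k n) (M_rep k n)\<bar>
                 \<ge> s * measure_pmf.expectation (tree_tuples k n) (M_rep k n)}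
         \<le> X / (s\<^sup>2 * L\<^sup>2) - 1 / s\<^sup>2"
proof -
  define A where "A = Om k n"
  have finA: "finite A" by (simp add: A_def finite_Om)
  have neA: "A \<noteq> {}" using Om_nonempty n by (simp add: A_def)
  define c where "c = real (card A)"
  have c: "c > 0" using finA neA by (simp add: c_def card_gt_0_iff)
  have tt: "tree_tuples k n = pmf_of_set A" by (simp add: tree_tuples_def A_def Om_def)
  define M where "M = M_rep k n"
  define E where "E = (\<Sum>x\<in>A. M x) / c"
  have EE: "measure_pmf.expectation (tree_tuples k n) (M_rep k n) = E"
    unfolding tt using integral_pmf_of_set[OF neA finA, of "M_rep k n"] by (simp add: E_def M_def c_def)
  have k1: "k \<ge> 1" using k by simp
  have n2: "n \<ge> 2" using n by simp
  have sumN2: "(\<Sum>x\<in>A. Nn 2 k n x) = c * real (k choose 2) * \<gamma>"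
    using sum_Nn[OF n2, where k=k and r=2] by (simp add: A_def c_def \<gamma>_def)
  have sumN3: "(\<Sum>x\<in>A. Nn 3 k n x) = c * \<epsilon>"
    using sum_Nn[OF n2, where k=k and r=3] by (simp add: A_def c_def \<epsilon>_def)
  have "(\<Sum>x\<in>A. Nn 2 k n x) - (\<Sum>x\<in>A. M x) \<le> (\<Sum>x\<in>A. Nn 3 k n x)"
    unfolding sum_subtractf[symmetric] M_def using M_bounds(3)[OF k1] by (intro sum_mono) auto
  then have "c * L \<le> (\<Sum>x\<in>A. M x)" using sumN2 sumN3 by (simp add: L_def algebra_simps)
  then have EL: "L \<le> E" using c by (simp add: E_def field_simps)
  have E0: "E > 0" using EL L by simp
  have sumM2: "(\<Sum>x\<in>A. (M x)\<^sup>2) \<le> c * X"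
  proof -
    have "(\<Sum>x\<in>A. (M x)\<^sup>2) \<le> (\<Sum>x\<in>A. (Nn 2 k n x)\<^sup>2)"
      unfolding M_def using M_bounds(1,2)[OF k1] by (intro sum_mono power_mono) auto
    also have "\<dots> = c * (real (k choose 2) * (\<Sum>e\<in>Kn_edges n. \<Sum>f\<in>Kn_edges n. (cnt2 n e f / card (spanning_trees n))\<^sup>2)
        + (real (k choose 2) * real (k choose 2) - real (k choose 2)) * \<gamma>\<^sup>2)"
      using sum_Nn_sq[OF n2, of k] by (simp add: A_def c_def \<gamma>_def)
    also have "\<dots> \<le> c * X"
    proof -
      have "real (k choose 2) * (\<Sum>e\<in>Kn_edges n. \<Sum>f\<in>Kn_edges n. (cnt2 n e f / card (spanning_trees n))\<^sup>2)
          \<le> real (k choose 2) * a"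
        using alpha_bound[OF n] by (intro mult_left_mono) (auto simp: a_def)
      then show ?thesis unfolding X_def using c by (intro mult_left_mono) auto
    qed
    finally show ?thesis .
  qed
  have set: "A \<inter> {Ts. s * E \<le> \<bar>M Ts - E\<bar>} = {x\<in>A. s * E \<le> \<bar>M x - E\<bar>}" by auto
  have prob: "measure_pmf.prob (tree_tuples k n) {Ts. \<bar>M_rep k n Ts - E\<bar> \<ge> s * E}
      = real (card {x\<in>A. s * E \<le> \<bar>M x - E\<bar>}) / c"
    unfolding tt using measure_pmf_of_set[OF neA finA, of "{Ts. s * E \<le> \<bar>M Ts - E\<bar>}"] set
    by (simp add: c_def M_def)
  have t: "s * E > 0" using s E0 by simp
  have cheb: "real (card {x\<in>A. s * E \<le> \<bar>M x - E\<bar>}) * (s * E)\<^sup>2 \<le> (\<Sum>x\<in>A. (M x - E)\<^sup>2)"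
    by (rule cheb_sum[OF finA t])
  also have "\<dots> = (\<Sum>x\<in>A. (M x)\<^sup>2) - c * E\<^sup>2"
    using var_sum[OF finA neA, of M] by (simp add: E_def c_def)
  also have "\<dots> \<le> c * X - c * E\<^sup>2" using sumM2 by simp
  finally have main: "real (card {x\<in>A. s * E \<le> \<bar>M x - E\<bar>}) * (s * E)\<^sup>2 \<le> c * (X - E\<^sup>2)"
    by (simp add: algebra_simps)
  have X0: "X \<ge> 0"
  proof -
    have "0 \<le> (\<Sum>x\<in>A. (M x)\<^sup>2)" by (intro sum_nonneg) auto
    then have "0 \<le> c * X" using sumM2 by linarith
    then show ?thesis using c by (auto simp: zero_le_mult_iff)
  qed
  have "real (card {x\<in>A. s * E \<le> \<bar>M x - E\<bar>}) / c \<le> (X - E\<^sup>2) / (s * E)\<^sup>2"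
  proof -
    define Q where "Q = real (card {x\<in>A. s * E \<le> \<bar>M x - E\<bar>})"
    define t2 where "t2 = (s * E)\<^sup>2"
    have t2: "t2 > 0" using s E0 by (simp add: t2_def)
    have m: "Q * t2 \<le> c * (X - E\<^sup>2)" using main by (simp add: Q_def t2_def)
    have "Q * t2 / (c * t2) \<le> c * (X - E\<^sup>2) / (c * t2)"
      using m c t2 by (intro divide_right_mono) auto
    moreover have "Q * t2 / (c * t2) = Q / c" using t2 by simp
    moreover have "c * (X - E\<^sup>2) / (c * t2) = (X - E\<^sup>2) / t2" using c by simp
    ultimately show ?thesis by (simp add: Q_def t2_def)
  qed
  also have "\<dots> = X / (s\<^sup>2 * E\<^sup>2) - 1 / s\<^sup>2"
    using s E0 by (simp add: field_simps power2_eq_square)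
  also have "\<dots> \<le> X / (s\<^sup>2 * L\<^sup>2) - 1 / s\<^sup>2"
  proof -
    have "s\<^sup>2 * L\<^sup>2 \<le> s\<^sup>2 * E\<^sup>2" using EL L by (intro mult_left_mono power_mono) auto
    moreover have "s\<^sup>2 * L\<^sup>2 > 0" using s L by simp
    ultimately have "X / (s\<^sup>2 * E\<^sup>2) \<le> X / (s\<^sup>2 * L\<^sup>2)" using X0 by (intro divide_left_mono) auto
    then show ?thesis by simp
  qed
  finally show ?thesis using prob EE by (simp add: M_def)
qed


theorem mainTheorem12:
  fixes k :: nat and s :: real
  assumes "k \<ge> 2" and "s > 0"
  shows "limsup (\<lambda>n. ereal (measure_pmf.prob (tree_tuples k n)
            {Ts. \<bar>M_rep k n Ts - measure_pmf.expectation (tree_tuples k n) (M_rep k n)\<bar>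
                 \<ge> s * measure_pmf.expectation (tree_tuples k n) (M_rep k n)}))
         \<le> ereal (1 / (s\<^sup>2 * real k * (real k - 1)))"
proof -
  note k = assms(1) and s = assms(2)
  define C2 where "C2 = real (k choose 2)"
  define C3 where "C3 = real (k choose 3)"
  define g where "g n = real (n choose 2) * (2 / real n)\<^sup>2" for n :: nat
  define ep where "ep n = C3 * real (n choose 2) * (2 / real n) ^ 3" for n :: nat
  define a where "a n = real (n choose 2) * ((2 / real n)\<^sup>2 + 2 * real n * (6 / ((real n - 1) * (real n - 2)))\<^sup>2
        + ((real n - 2) * (2 / real n))\<^sup>2 / (real (n choose 2) - 1 - 2 * real n))" for n :: nat
  define X where "X n = C2 * a n + (C2 * C2 - C2) * (g n)\<^sup>2" for n
  define L where "L n = C2 * g n - ep n" for n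
  define u where "u n = X n / (s\<^sup>2 * (L n)\<^sup>2) - 1 / s\<^sup>2" for n
  define P where "P n = measure_pmf.prob (tree_tuples k n)
            {Ts. \<bar>M_rep k n Ts - measure_pmf.expectation (tree_tuples k n) (M_rep k n)\<bar>
                 \<ge> s * measure_pmf.expectation (tree_tuples k n) (M_rep k n)}" for n
  have C2: "C2 = real k * (real k - 1) / 2" by (simp add: C2_def real_choose2)
  have C2pos: "C2 > 0" using k by (simp add: C2 )
  have g_lim: "g \<longlonglongrightarrow> 2"
  proof -
    have "g = (\<lambda>n. real n * (real n - 1) / 2 * (2 / real n)\<^sup>2)" by (simp add: g_def real_choose2 fun_eq_iff)
    moreover have "(\<lambda>n. real n * (real n - 1) / 2 * (2 / real n)\<^sup>2) \<longlonglongrightarrow> 2" by real_asymp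
    ultimately show ?thesis by simp
  qed
  have ep_lim: "ep \<longlonglongrightarrow> 0"
  proof -
    have "ep = (\<lambda>n. C3 * (real n * (real n - 1) / 2 * (2 / real n)^3))"
      by (simp add: ep_def real_choose2 fun_eq_iff)
    moreover have "(\<lambda>n. real n * (real n - 1) / 2 * (2 / real n)^3) \<longlonglongrightarrow> 0" by real_asymp
    ultimately show ?thesis using tendsto_mult_right_zero by auto
  qed
  have a_lim: "a \<longlonglongrightarrow> 6"
  proof -
    have "a = (\<lambda>n. real n * (real n - 1) / 2 * ((2 / real n)\<^sup>2 + 2 * real n * (6 / ((real n - 1) * (real n - 2)))\<^sup>2
        + ((real n - 2) * (2 / real n))\<^sup>2 / (real n * (real n - 1) / 2 - 1 - 2 * real n)))"
      by (simp add: a_def real_choose2 fun_eq_iff)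
    moreover have "(\<lambda>n. real n * (real n - 1) / 2 * ((2 / real n)\<^sup>2 + 2 * real n * (6 / ((real n - 1) * (real n - 2)))\<^sup>2
        + ((real n - 2) * (2 / real n))\<^sup>2 / (real n * (real n - 1) / 2 - 1 - 2 * real n))) \<longlonglongrightarrow> 6"
      by real_asymp
    ultimately show ?thesis by simp
  qed
  have L_lim: "L \<longlonglongrightarrow> C2 * 2 - 0"
    unfolding L_def by (intro tendsto_intros g_lim ep_lim)
  have X_lim: "X \<longlonglongrightarrow> C2 * 6 + (C2 * C2 - C2) * 2\<^sup>2"
    unfolding X_def by (intro tendsto_intros g_lim a_lim)
  have u_lim: "u \<longlonglongrightarrow> (C2 * 6 + (C2 * C2 - C2) * 2\<^sup>2) / (s\<^sup>2 * (C2 * 2 - 0)\<^sup>2) - 1 / s\<^sup>2"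
    unfolding u_def using C2pos s by (intro tendsto_intros X_lim L_lim) auto
  have val: "(C2 * 6 + (C2 * C2 - C2) * 2\<^sup>2) / (s\<^sup>2 * (C2 * 2 - 0)\<^sup>2) - 1 / s\<^sup>2
      = 1 / (s\<^sup>2 * real k * (real k - 1))"
  proof -
    have "(C2 * 6 + (C2 * C2 - C2) * 2\<^sup>2) / (s\<^sup>2 * (C2 * 2 - 0)\<^sup>2) - 1 / s\<^sup>2 = 1 / (s\<^sup>2 * (2 * C2))"
      using C2pos s by (simp add: field_simps power2_eq_square)
    then show ?thesis by (simp add: C2 mult.assoc)
  qed
  have evL: "eventually (\<lambda>n. L n > 0) sequentially"
    using L_lim C2pos by (intro order_tendstoD(1)[OF L_lim]) simp
  have ev: "eventually (\<lambda>n. P n \<le> u n) sequentially"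
    using evL eventually_ge_at_top[of 7]
  proof eventually_elim
    case (elim n)
    show ?case
      using per_n[OF k elim(2) s] elim(1)
      unfolding P_def u_def X_def L_def a_def g_def ep_def C2_def C3_def by simp
  qed
  have "limsup (\<lambda>n. ereal (P n)) \<le> limsup (\<lambda>n. ereal (u n))"
    by (rule Limsup_mono) (use ev in \<open>auto elim: eventually_mono\<close>)
  also have "limsup (\<lambda>n. ereal (u n)) = ereal (1 / (s\<^sup>2 * real k * (real k - 1)))"
    by (rule lim_imp_Limsup) (use u_lim val in \<open>auto intro: tendsto_ereal\<close>)
  finally show ?thesis by (simp add: P_def)
qed

end
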